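(* Let $p,g_i,S,d,R,\eta_i,\beta$ be as in the context and let $h$ be the form defined there in the variables $z=(z_1,\dots,z_{n+m+3})=(x_1,\dots,x_n,s_0,\dots,s_{m+1},y)$. Then $p(x)>0$ for all $x\in S$ if and only if there exists a positive integer $r$ such that the polynomial in $(v,w)\in\mathbb{R}^{2(n+m+3)}$ $$\Big(h(v^2-w^2)-\tfrac1r\Big(\sum_{i=1}^{n+m+3}(v_i^2-w_i^2)^2\Big)^{2d}+\tfrac{1}{2r}\Big(\sum_{i=1}^{n+m+3}(v_i^4+w_i^4)\Big)^{2d}\Big)\cdot\Big(\sum_{i=1}^{n+m+3}v_i^2+\sum_{i=1}^{n+m+3}w_i^2\Big)^{r^2}$$ has nonnegative coefficients.
   Context: Let $p,g_1,\dots,g_m$ be real polynomials in $x=(x_1,\dots,x_n)$ and let $S=\{x\in\mathbb{R}^n : g_i(x)\ge 0,\ i=1,\dots,m\}$. Let $d\ge 1$ be the integer such that $2d$ is the smallest even integer larger than or equal to the maximum of the degrees of $p,g_1,\dots,g_m$. Assume there is $R>0$ with $\sum_{i=1}^n x_i^2\le R$ for all $x\in S$. Let $\eta_1,\dots,\eta_m$ be real numbers with $g_i(x)\le\eta_i$ for all $x\in S$, and let $\beta$ be a real number with $-p(x)\le\beta$ for all $x\in S$. For a polynomial $q$ in $x$ of degree at most $2d$, $y^{2d}q(x/y)$ denotes its homogenization to a form of degree $2d$ in $(x,y)$. Define $$h(x,s,y)=\big(y^{2d}p(x/y)+s_0^2y^{2d-2}\big)^2+\sum_{i=1}^m\big(y^{2d}g_i(x/y)-s_i^2y^{2d-2}\big)^2+\Big(\big(R+\textstyle\sum_{i=1}^m\eta_i+\beta\big)^d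 y^{2d}-\big(\sum_{i=1}^n x_i^2+\sum_{i=0}^m s_i^2\big)^d-s_{m+1}^{2d}\Big)^2,$$ a form of degree $4d$. $h(v^2-w^2)$ denotes $h$ evaluated at $z_i=v_i^2-w_i^2$, $i=1,\dots,n+m+3$. (The exponent $2d$ on the two added terms makes all terms homogeneous of degree $8d$; the paper's printed exponent $d$ is a typo.) *)

theory Defs
  imports Complex_Main "HOL-Library.Poly_Mapping"
begin

type_synonym mpoly = "(nat \<Rightarrow>\<^sub>0 nat) \<Rightarrow>\<^sub>0 real"

definition mon_deg :: "(nat \<Rightarrow>\<^sub>0 nat) \<Rightarrow> nat" where
  "mon_deg \<alpha> = (\<Sum>i\<in>Poly_Mapping.keys \<alpha>. Poly_Mapping.lookup \<alpha> i)"

definition total_deg :: "mpoly \<Rightarrow> nat" where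
  "total_deg q = Max (insert 0 (mon_deg ` Poly_Mapping.keys q))"

definition const :: "real \<Rightarrow> mpoly" where
  "const c = Poly_Mapping.single 0 c"

definition var :: "nat \<Rightarrow> mpoly" where
  "var i = Poly_Mapping.single (Poly_Mapping.single i 1) 1"

definition eval :: "mpoly \<Rightarrow> (nat \<Rightarrow> real) \<Rightarrow> real" where
  "eval q x = (\<Sum>\<alpha>\<in>Poly_Mapping.keys q. Poly_Mapping.lookup q \<alpha> * (\<Prod>i\<in>Poly_Mapping.keys \<alpha>. x i ^ Poly_Mapping.lookup \<alpha> i))"

definition subst :: "mpoly \<Rightarrow> (nat \<Rightarrow> mpoly) \<Rightarrow> mpoly" where
  "subst q \<sigma> = (\<Sum>\<alpha>\<in>Poly_Mapping.keys q. const (Poly_Mapping.lookup q \<alpha>) * (\<Prod>i\<in>Poly_Mapping.keys \<alpha>. \<sigma> i ^ Poly_Mapping.lookup \<alpha> i))"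

text \<open>homogenization y^k q(x/y) of a polynomial q of degree <= k, as a polynomial
  in the variables var 0 .. (variables of q) and the variable Y\<close>
definition homog :: "nat \<Rightarrow> mpoly \<Rightarrow> mpoly \<Rightarrow> mpoly" where
  "homog k q Y = (\<Sum>\<alpha>\<in>Poly_Mapping.keys q. const (Poly_Mapping.lookup q \<alpha>) * (\<Prod>i\<in>Poly_Mapping.keys \<alpha>. var i ^ Poly_Mapping.lookup \<alpha> i)
                     * Y ^ (k - mon_deg \<alpha>))"

text \<open>The semialgebraic set S in R^n (points as functions vanishing beyond index n-1);
  the constraints g_1..g_m are g 1, ..., g m.\<close>
definition semialg :: "nat \<Rightarrow> nat \<Rightarrow> (nat \<Rightarrow> mpoly) \<Rightarrow> (nat \<Rightarrow> real) set" where
  "semialg n m g = {x. (\<forall>i\<ge>n. x i = 0) \<and> (\<forall>i\<in>{1..m}. 0 \<le> eval (g i) x)}"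

text \<open>The form h in z = (x_1..x_n, s_0..s_{m+1}, y), with x_j = var (j-1),
  s_i = var (n+i), y = var (n+m+2).\<close>
definition hform :: "nat \<Rightarrow> nat \<Rightarrow> nat \<Rightarrow> mpoly \<Rightarrow> (nat \<Rightarrow> mpoly) \<Rightarrow> real \<Rightarrow> (nat \<Rightarrow> real) \<Rightarrow> real \<Rightarrow> mpoly" where
  "hform n m d p g R \<eta> \<beta> =
    (let y = var (n+m+2); s = (\<lambda>i. var (n+i)) in
      (homog (2*d) p y + s 0 ^ 2 * y ^ (2*d-2)) ^ 2
      + (\<Sum>i=1..m. (homog (2*d) (g i) y - s i ^ 2 * y ^ (2*d-2)) ^ 2)
      + (const ((R + (\<Sum>i=1..m. \<eta> i) + \<beta>) ^ d) * y ^ (2*d)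
          - ((\<Sum>j<n. var j ^ 2) + (\<Sum>i=0..m. s i ^ 2)) ^ d
          - s (m+1) ^ (2*d)) ^ 2)"

text \<open>In the (v,w) polynomial ring: v_i = var (2 i), w_i = var (2 i + 1), i = 0..N-1
  (0-based index for z_{i+1}).\<close>
definition vv :: "nat \<Rightarrow> mpoly" where "vv i = var (2*i)"
definition ww :: "nat \<Rightarrow> mpoly" where "ww i = var (2*i+1)"

definition certificate :: "nat \<Rightarrow> nat \<Rightarrow> nat \<Rightarrow> mpoly \<Rightarrow> (nat \<Rightarrow> mpoly) \<Rightarrow> real \<Rightarrow> (nat \<Rightarrow> real) \<Rightarrow> real \<Rightarrow> nat \<Rightarrow> mpoly" where
  "certificate n m d p g R \<eta> \<beta> r =
    (let N = n+m+3; z = (\<lambda>i. vv i ^ 2 - ww i ^ 2) in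
      (subst (hform n m d p g R \<eta> \<beta>) z
        - const (1 / real r) * (\<Sum>i<N. z i ^ 2) ^ (2*d)
        + const (1 / (2 * real r)) * (\<Sum>i<N. vv i ^ 4 + ww i ^ 4) ^ (2*d))
      * ((\<Sum>i<N. vv i ^ 2) + (\<Sum>i<N. ww i ^ 2)) ^ (r^2))"

end

theory Submission
  imports Defs "HOL-Analysis.Analysis"
begin


definition mmono :: "(nat \<Rightarrow> 'b::comm_semiring_1) \<Rightarrow> (nat \<Rightarrow>\<^sub>0 nat) \<Rightarrow> 'b" where
  "mmono \<phi> \<alpha> = (\<Prod>i\<in>Poly_Mapping.keys \<alpha>. \<phi> i ^ Poly_Mapping.lookup \<alpha> i)"

lemma mmono_superset:
  assumes "finite A" "Poly_Mapping.keys \<alpha> \<subseteq> A"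
  shows "mmono \<phi> \<alpha> = (\<Prod>i\<in>A. \<phi> i ^ Poly_Mapping.lookup \<alpha> i)"
  unfolding mmono_def
  by (rule prod.mono_neutral_left) (use assms in \<open>auto simp: in_keys_iff\<close>)

lemma mmono_add: "mmono \<phi> (\<alpha> + \<beta>) = mmono \<phi> \<alpha> * mmono \<phi> \<beta>"
proof -
  let ?A = "Poly_Mapping.keys \<alpha> \<union> Poly_Mapping.keys \<beta>"
  have "mmono \<phi> (\<alpha> + \<beta>) = (\<Prod>i\<in>?A. \<phi> i ^ Poly_Mapping.lookup (\<alpha>+\<beta>) i)"
    by (rule mmono_superset) (auto dest: keys_add[THEN subsetD])
  also have "\<dots> = (\<Prod>i\<in>?A. \<phi> i ^ Poly_Mapping.lookup \<alpha> i) * (\<Prod>i\<in>?A. \<phi> i ^ Poly_Mapping.lookup \<beta> i)"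
    by (simp add: lookup_add power_add prod.distrib)
  also have "\<dots> = mmono \<phi> \<alpha> * mmono \<phi> \<beta>"
    by (subst (1 2) mmono_superset[of ?A]) auto
  finally show ?thesis .
qed

lemma mmono_zero [simp]: "mmono \<phi> 0 = 1"
  by (simp add: mmono_def)

lemma mmono_single [simp]: "mmono \<phi> (Poly_Mapping.single i k) = \<phi> i ^ k"
  by (simp add: mmono_def)

definition rhom :: "(real \<Rightarrow> 'b::comm_ring_1) \<Rightarrow> bool" where
  "rhom f \<longleftrightarrow> (\<forall>a b. f (a+b) = f a + f b) \<and> (\<forall>a b. f (a*b) = f a * f b) \<and> f 1 = 1"

lemma rhom_add: "rhom f \<Longrightarrow> f (a+b) = f a + f b" by (simp add: rhom_def)
lemma rhom_mult: "rhom f \<Longrightarrow> f (a*b) = f a * f b" by (simp add: rhom_def)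
lemma rhom_one: "rhom f \<Longrightarrow> f 1 = 1" by (simp add: rhom_def)
lemma rhom_zero: "rhom f \<Longrightarrow> f 0 = 0"
  using rhom_add[of f 0 0] by simp
lemma rhom_uminus: "rhom f \<Longrightarrow> f (- a) = - f a"
  using rhom_add[of f a "-a"] rhom_zero[of f] by (simp add: eq_neg_iff_add_eq_0 add.commute)

definition ev :: "(real \<Rightarrow> 'b::comm_ring_1) \<Rightarrow> (nat \<Rightarrow> 'b) \<Rightarrow> mpoly \<Rightarrow> 'b" where
  "ev f \<phi> q = (\<Sum>\<alpha>\<in>Poly_Mapping.keys q. f (Poly_Mapping.lookup q \<alpha>) * mmono \<phi> \<alpha>)"

lemma ev_superset:
  assumes "rhom f" "finite A" "Poly_Mapping.keys q \<subseteq> A"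
  shows "ev f \<phi> q = (\<Sum>\<alpha>\<in>A. f (Poly_Mapping.lookup q \<alpha>) * mmono \<phi> \<alpha>)"
  unfolding ev_def
  by (rule sum.mono_neutral_left) (use assms in \<open>auto simp: in_keys_iff rhom_zero\<close>)

lemma ev_add: assumes "rhom f" shows "ev f \<phi> (p + q) = ev f \<phi> p + ev f \<phi> q"
proof -
  let ?A = "Poly_Mapping.keys p \<union> Poly_Mapping.keys q"
  have "ev f \<phi> (p + q) = (\<Sum>\<alpha>\<in>?A. f (Poly_Mapping.lookup (p+q) \<alpha>) * mmono \<phi> \<alpha>)"
    by (rule ev_superset) (use assms in \<open>auto dest: keys_add[THEN subsetD]\<close>)
  also have "\<dots> = (\<Sum>\<alpha>\<in>?A. f (Poly_Mapping.lookup p \<alpha>) * mmono \<phi> \<alpha>) + (\<Sum>\<alpha>\<in>?A. f (Poly_Mapping.lookup q \<alpha>) * mmono \<phi> \<alpha>)"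
    by (simp add: lookup_add rhom_add[OF assms] distrib_right sum.distrib)
  also have "\<dots> = ev f \<phi> p + ev f \<phi> q"
    by (subst (1 2) ev_superset[OF assms, of ?A]) auto
  finally show ?thesis .
qed

lemma ev_zero [simp]: "ev f \<phi> 0 = 0" by (simp add: ev_def)

lemma ev_uminus: assumes "rhom f" shows "ev f \<phi> (- p) = - ev f \<phi> p"
  unfolding ev_def by (simp add: rhom_uminus[OF assms] keys_minus sum_negf)

lemma ev_diff: assumes "rhom f" shows "ev f \<phi> (p - q) = ev f \<phi> p - ev f \<phi> q"
  using ev_add[OF assms, of \<phi> p "-q"] ev_uminus[OF assms, of \<phi> q] by simp

lemma ev_single: assumes "rhom f" shows "ev f \<phi> (Poly_Mapping.single \<alpha> c) = f c * mmono \<phi> \<alpha>"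
  by (cases "c = 0") (auto simp: ev_def rhom_zero[OF assms])

lemma ev_sum: assumes "rhom f" shows "ev f \<phi> (sum P I) = (\<Sum>i\<in>I. ev f \<phi> (P i))"
  by (induction I rule: infinite_finite_induct) (auto simp: ev_add[OF assms])

lemma poly_decomp: "q = (\<Sum>\<alpha>\<in>Poly_Mapping.keys q. Poly_Mapping.single \<alpha> (Poly_Mapping.lookup q \<alpha>))"
proof (rule poly_mapping_eqI)
  fix k
  show "Poly_Mapping.lookup q k = Poly_Mapping.lookup (\<Sum>\<alpha>\<in>Poly_Mapping.keys q. Poly_Mapping.single \<alpha> (Poly_Mapping.lookup q \<alpha>)) k"
    by (cases "k \<in> Poly_Mapping.keys q") (auto simp: lookup_sum lookup_single when_def in_keys_iff)
qed

lemma prod_decomp: "(p::mpoly) * q = (\<Sum>\<alpha>\<in>Poly_Mapping.keys p. \<Sum>\<beta>\<in>Poly_Mapping.keys q.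
     Poly_Mapping.single (\<alpha>+\<beta>) (Poly_Mapping.lookup p \<alpha> * Poly_Mapping.lookup q \<beta>))"
proof -
  have "p * q = (\<Sum>\<alpha>\<in>Poly_Mapping.keys p. Poly_Mapping.single \<alpha> (Poly_Mapping.lookup p \<alpha>)) *
                (\<Sum>\<beta>\<in>Poly_Mapping.keys q. Poly_Mapping.single \<beta> (Poly_Mapping.lookup q \<beta>))"
    by (subst (1) poly_decomp, subst (2) poly_decomp) (rule refl)
  then show ?thesis by (simp add: sum_product mult_single)
qed

lemma ev_mult: assumes "rhom f" shows "ev f \<phi> (p * q) = ev f \<phi> p * ev f \<phi> q"
proof -
  have "ev f \<phi> (p * q) = (\<Sum>\<alpha>\<in>Poly_Mapping.keys p. \<Sum>\<beta>\<in>Poly_Mapping.keys q.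
      (f (Poly_Mapping.lookup p \<alpha>) * mmono \<phi> \<alpha>) * (f (Poly_Mapping.lookup q \<beta>) * mmono \<phi> \<beta>))"
    by (subst prod_decomp) (simp add: ev_sum[OF assms] ev_single[OF assms] rhom_mult[OF assms] mmono_add mult_ac)
  also have "\<dots> = ev f \<phi> p * ev f \<phi> q"
    by (simp add: ev_def sum_product)
  finally show ?thesis .
qed

lemma ev_one: assumes "rhom f" shows "ev f \<phi> 1 = 1"
  using ev_single[OF assms, of \<phi> 0 1] by (simp add: rhom_one[OF assms])

lemma ev_power: assumes "rhom f" shows "ev f \<phi> (p ^ k) = ev f \<phi> p ^ k"
  by (induction k) (auto simp: ev_one[OF assms] ev_mult[OF assms])

lemma ev_prod: assumes "rhom f" shows "ev f \<phi> (prod P I) = (\<Prod>i\<in>I. ev f \<phi> (P i))"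
  by (induction I rule: infinite_finite_induct) (auto simp: ev_one[OF assms] ev_mult[OF assms])

lemma ev_const: assumes "rhom f" shows "ev f \<phi> (const c) = f c"
  using ev_single[OF assms, of \<phi> 0 c] by (simp add: const_def)

lemma ev_var: assumes "rhom f" shows "ev f \<phi> (var i) = \<phi> i"
  using ev_single[OF assms, of \<phi> "Poly_Mapping.single i 1" 1] by (simp add: var_def rhom_one[OF assms])

lemma rhom_id: "rhom (\<lambda>c. c)" by (simp add: rhom_def)
lemma rhom_const: "rhom const"
  by (simp add: rhom_def const_def single_add mult_single)

lemma eval_ev: "eval q x = ev (\<lambda>c. c) x q"
  by (simp add: eval_def ev_def mmono_def)
lemma subst_ev: "subst q \<sigma> = ev const \<sigma> q"
  by (simp add: subst_def ev_def mmono_def)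

lemma ev_mmono: assumes "rhom g" shows "ev g \<tau> (mmono \<sigma> \<alpha>) = mmono (\<lambda>i. ev g \<tau> (\<sigma> i)) \<alpha>"
  by (simp add: mmono_def ev_prod[OF assms] ev_power[OF assms])

lemma ev_ev: assumes "rhom f" "rhom g"
  shows "ev g \<tau> (ev f \<sigma> q) = ev (\<lambda>c. ev g \<tau> (f c)) (\<lambda>i. ev g \<tau> (\<sigma> i)) q"
  by (simp add: ev_def[of f] ev_sum[OF assms(2)] ev_mult[OF assms(2)] ev_mmono[OF assms(2)])
     (simp add: ev_def)

lemma eval_subst: "eval (subst q \<sigma>) x = eval q (\<lambda>i. eval (\<sigma> i) x)"
  unfolding eval_ev subst_ev
  by (simp add: ev_ev[OF rhom_const rhom_id] ev_const[OF rhom_id])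

lemma subst_subst: "subst (subst q \<sigma>) \<tau> = subst q (\<lambda>i. subst (\<sigma> i) \<tau>)"
  unfolding subst_ev
  by (simp add: ev_ev[OF rhom_const rhom_const] ev_const[OF rhom_const])

lemma eval_add [simp]: "eval (p + q) x = eval p x + eval q x" by (simp add: eval_ev ev_add[OF rhom_id])
lemma eval_diff [simp]: "eval (p - q) x = eval p x - eval q x" by (simp add: eval_ev ev_diff[OF rhom_id])
lemma eval_uminus [simp]: "eval (- q) x = - eval q x" by (simp add: eval_ev ev_uminus[OF rhom_id])
lemma eval_mult [simp]: "eval (p * q) x = eval p x * eval q x" by (simp add: eval_ev ev_mult[OF rhom_id])
lemma eval_power [simp]: "eval (p ^ k) x = eval p x ^ k" by (simp add: eval_ev ev_power[OF rhom_id])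
lemma eval_sum [simp]: "eval (sum P I) x = (\<Sum>i\<in>I. eval (P i) x)" by (simp add: eval_ev ev_sum[OF rhom_id])
lemma eval_prod [simp]: "eval (prod P I) x = (\<Prod>i\<in>I. eval (P i) x)" by (simp add: eval_ev ev_prod[OF rhom_id])
lemma eval_const [simp]: "eval (const c) x = c" by (simp add: eval_ev ev_const[OF rhom_id])
lemma eval_var [simp]: "eval (var i) x = x i" by (simp add: eval_ev ev_var[OF rhom_id])
lemma eval_one [simp]: "eval 1 x = 1" by (simp add: eval_ev ev_one[OF rhom_id])
lemma eval_zero [simp]: "eval 0 x = 0" by (simp add: eval_ev)

lemma subst_add [simp]: "subst (p + q) x = subst p x + subst q x" by (simp add: subst_ev ev_add[OF rhom_const])
lemma subst_diff [simp]: "subst (p - q) x = subst p x - subst q x" by (simp add: subst_ev ev_diff[OF rhom_const])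
lemma subst_uminus [simp]: "subst (- q) x = - subst q x" by (simp add: subst_ev ev_uminus[OF rhom_const])
lemma subst_mult [simp]: "subst (p * q) x = subst p x * subst q x" by (simp add: subst_ev ev_mult[OF rhom_const])
lemma subst_power [simp]: "subst (p ^ k) x = subst p x ^ k" by (simp add: subst_ev ev_power[OF rhom_const])
lemma subst_sum [simp]: "subst (sum P I) x = (\<Sum>i\<in>I. subst (P i) x)" by (simp add: subst_ev ev_sum[OF rhom_const])
lemma subst_prod [simp]: "subst (prod P I) x = (\<Prod>i\<in>I. subst (P i) x)" by (simp add: subst_ev ev_prod[OF rhom_const])
lemma subst_const [simp]: "subst (const c) x = const c" by (simp add: subst_ev ev_const[OF rhom_const])
lemma subst_var [simp]: "subst (var i) x = x i" by (simp add: subst_ev ev_var[OF rhom_const])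
lemma subst_one [simp]: "subst 1 x = 1" by (simp add: subst_ev ev_one[OF rhom_const])
lemma subst_zero [simp]: "subst 0 x = 0" by (simp add: subst_ev)

lemma const_mult: "const (a * b) = const a * const b"
  by (simp add: const_def mult_single)
lemma const_add: "const (a + b) = const a + const b"
  by (simp add: const_def single_add)
lemma const_one [simp]: "const 1 = 1" by (simp add: const_def)
lemma const_zero [simp]: "const 0 = 0" by (simp add: const_def)

section \<open>Nonnegative coefficients\<close>

definition nn :: "mpoly \<Rightarrow> bool" where
  "nn q \<longleftrightarrow> (\<forall>\<alpha>. 0 \<le> Poly_Mapping.lookup q \<alpha>)"

lemma nn_add: "nn p \<Longrightarrow> nn q \<Longrightarrow> nn (p + q)"
  by (simp add: nn_def lookup_add)

lemma nn_sum: "(\<And>i. i \<in> I \<Longrightarrow> nn (P i)) \<Longrightarrow> nn (sum P I)"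
  by (simp add: nn_def lookup_sum sum_nonneg)

lemma nn_single: "0 \<le> c \<Longrightarrow> nn (Poly_Mapping.single \<alpha> c)"
  by (simp add: nn_def lookup_single when_def)

lemma nn_mult: assumes "nn p" "nn q" shows "nn (p * q)"
  by (subst prod_decomp) (intro nn_sum nn_single, use assms in \<open>auto simp: nn_def\<close>)

lemma nn_one: "nn 1"
  by (simp add: nn_def lookup_one when_def)

lemma nn_power: "nn p \<Longrightarrow> nn (p ^ k)"
  by (induction k) (auto intro: nn_mult nn_one)

lemma nn_prod: "(\<And>i. i \<in> I \<Longrightarrow> nn (P i)) \<Longrightarrow> nn (prod P I)"
  by (induction I rule: infinite_finite_induct) (auto intro: nn_mult nn_one)

lemma nn_const: "0 \<le> c \<Longrightarrow> nn (const c)"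
  by (simp add: const_def nn_single)

lemma nn_var: "nn (var i)"
  by (simp add: var_def nn_single)

lemma nn_subst: assumes "nn q" "\<And>i. nn (\<sigma> i)" shows "nn (subst q \<sigma>)"
  unfolding subst_def
  by (intro nn_sum nn_mult nn_const nn_prod nn_power) (use assms in \<open>auto simp: nn_def\<close>)

lemma eval_nonneg: assumes "nn q" "\<And>i. 0 \<le> x i" shows "0 \<le> eval q x"
  unfolding eval_def using assms by (auto simp: nn_def intro!: sum_nonneg mult_nonneg_nonneg prod_nonneg)



definition hom :: "nat \<Rightarrow> nat set \<Rightarrow> mpoly \<Rightarrow> bool" where
  "hom D V q \<longleftrightarrow> (\<forall>\<alpha>\<in>Poly_Mapping.keys q. mon_deg \<alpha> = D \<and> Poly_Mapping.keys \<alpha> \<subseteq> V)"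

lemma mon_deg_superset: "finite A \<Longrightarrow> Poly_Mapping.keys \<alpha> \<subseteq> A \<Longrightarrow> mon_deg \<alpha> = (\<Sum>i\<in>A. Poly_Mapping.lookup \<alpha> i)"
  unfolding mon_deg_def by (rule sum.mono_neutral_left) (auto simp: in_keys_iff)

lemma mon_deg_add: "mon_deg (\<alpha> + \<beta>) = mon_deg \<alpha> + mon_deg \<beta>"
proof -
  let ?A = "Poly_Mapping.keys \<alpha> \<union> Poly_Mapping.keys \<beta>"
  have "mon_deg (\<alpha> + \<beta>) = (\<Sum>i\<in>?A. Poly_Mapping.lookup (\<alpha>+\<beta>) i)"
    by (rule mon_deg_superset) (auto dest: keys_add[THEN subsetD])
  also have "\<dots> = (\<Sum>i\<in>?A. Poly_Mapping.lookup \<alpha> i) + (\<Sum>i\<in>?A. Poly_Mapping.lookup \<beta> i)"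
    by (simp add: lookup_add sum.distrib)
  also have "\<dots> = mon_deg \<alpha> + mon_deg \<beta>"
    by (subst (1 2) mon_deg_superset[of ?A]) auto
  finally show ?thesis .
qed

lemma mon_deg_zero [simp]: "mon_deg 0 = 0" by (simp add: mon_deg_def)
lemma mon_deg_single [simp]: "mon_deg (Poly_Mapping.single i k) = k" by (simp add: mon_deg_def)

lemma hom_zero [simp]: "hom D V 0" by (simp add: hom_def)

lemma hom_add: "hom D V p \<Longrightarrow> hom D V q \<Longrightarrow> hom D V (p + q)"
  unfolding hom_def by (auto dest: keys_add[THEN subsetD])

lemma hom_uminus: "hom D V p \<Longrightarrow> hom D V (- p)"
  unfolding hom_def by (auto simp: keys_minus)

lemma hom_diff: "hom D V p \<Longrightarrow> hom D V q \<Longrightarrow> hom D V (p - q)"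
  using hom_add[of D V p "-q"] hom_uminus[of D V q] by simp

lemma hom_sum: "(\<And>i. i \<in> I \<Longrightarrow> hom D V (P i)) \<Longrightarrow> hom D V (sum P I)"
  by (induction I rule: infinite_finite_induct) (auto intro: hom_add)

lemma hom_mult: assumes "hom D1 V p" "hom D2 V q" shows "hom (D1 + D2) V (p * q)"
  unfolding hom_def
proof
  fix \<gamma> assume "\<gamma> \<in> Poly_Mapping.keys (p * q)"
  then obtain a b where "\<gamma> = a + b" "a \<in> Poly_Mapping.keys p" "b \<in> Poly_Mapping.keys q"
    using keys_mult by blast
  moreover have "Poly_Mapping.keys (a + b) \<subseteq> Poly_Mapping.keys a \<union> Poly_Mapping.keys b" by (rule keys_add)
  ultimately show "mon_deg \<gamma> = D1 + D2 \<and> Poly_Mapping.keys \<gamma> \<subseteq> V"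
    using assms by (auto simp: hom_def mon_deg_add)
qed

lemma hom_one: "hom 0 V 1" by (simp add: hom_def)

lemma hom_power: "hom D V p \<Longrightarrow> hom (D * k) V (p ^ k)"
proof (induction k)
  case 0 then show ?case by (simp add: hom_one)
next
  case (Suc k) then show ?case using hom_mult[of D V p "D*k" "p^k"] by (simp add: add.commute)
qed

lemma hom_prod: "(\<And>i. i \<in> I \<Longrightarrow> hom (d i) V (P i)) \<Longrightarrow> hom (sum d I) V (prod P I)"
  by (induction I rule: infinite_finite_induct) (auto intro: hom_mult hom_one)

lemma hom_const: "hom 0 V (const c)" by (simp add: hom_def const_def)
lemma hom_var: "i \<in> V \<Longrightarrow> hom 1 V (var i)" by (simp add: hom_def var_def)

lemma hom_cmult: "hom D V q \<Longrightarrow> hom D V (const c * q)"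
  using hom_mult[OF hom_const] by fastforce

lemma hom_subst: assumes "hom D V q" "\<And>i. i \<in> V \<Longrightarrow> hom 1 W (\<sigma> i)"
  shows "hom D W (subst q \<sigma>)"
  unfolding subst_def
proof (intro hom_sum)
  fix \<alpha> assume a: "\<alpha> \<in> Poly_Mapping.keys q"
  then have "mon_deg \<alpha> = D" "Poly_Mapping.keys \<alpha> \<subseteq> V" using assms(1) by (auto simp: hom_def)
  have "hom (\<Sum>i\<in>Poly_Mapping.keys \<alpha>. 1 * Poly_Mapping.lookup \<alpha> i) W (\<Prod>i\<in>Poly_Mapping.keys \<alpha>. \<sigma> i ^ Poly_Mapping.lookup \<alpha> i)"
    by (intro hom_prod hom_power) (use assms(2) \<open>Poly_Mapping.keys \<alpha> \<subseteq> V\<close> in auto)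
  then have "hom D W (\<Prod>i\<in>Poly_Mapping.keys \<alpha>. \<sigma> i ^ Poly_Mapping.lookup \<alpha> i)"
    using \<open>mon_deg \<alpha> = D\<close> by (simp add: mon_deg_def)
  then show "hom D W (const (Poly_Mapping.lookup q \<alpha>) * (\<Prod>i\<in>Poly_Mapping.keys \<alpha>. \<sigma> i ^ Poly_Mapping.lookup \<alpha> i))"
    by (rule hom_cmult)
qed

lemma eval_scale: assumes "hom D V q" shows "eval q (\<lambda>i. t * x i) = t ^ D * eval q x"
  unfolding eval_def sum_distrib_left
proof (rule sum.cong[OF refl])
  fix \<alpha> assume "\<alpha> \<in> Poly_Mapping.keys q"
  then have "mon_deg \<alpha> = D" using assms by (auto simp: hom_def)
  then show "Poly_Mapping.lookup q \<alpha> * (\<Prod>i\<in>Poly_Mapping.keys \<alpha>. (t * x i) ^ Poly_Mapping.lookup \<alpha> i) =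
    t ^ D * (Poly_Mapping.lookup q \<alpha> * (\<Prod>i\<in>Poly_Mapping.keys \<alpha>. x i ^ Poly_Mapping.lookup \<alpha> i))"
    by (simp add: power_mult_distrib prod.distrib power_sum[symmetric] mon_deg_def)
qed

lemma eval_cong: assumes "hom D V q" "\<And>i. i \<in> V \<Longrightarrow> x i = y i" shows "eval q x = eval q y"
  unfolding eval_def
proof (rule sum.cong[OF refl], rule arg_cong[where f="\<lambda>u. _ * u"], rule prod.cong[OF refl])
  fix \<alpha> i assume "\<alpha> \<in> Poly_Mapping.keys q" "i \<in> Poly_Mapping.keys \<alpha>"
  then have "i \<in> V" using assms(1) by (auto simp: hom_def)
  then show "x i ^ Poly_Mapping.lookup \<alpha> i = y i ^ Poly_Mapping.lookup \<alpha> i" using assms(2) by simp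
qed

lemma mon_deg_le_total: "\<alpha> \<in> Poly_Mapping.keys q \<Longrightarrow> mon_deg \<alpha> \<le> total_deg q"
  unfolding total_deg_def by (rule Max_ge) auto

lemma hom_homog:
  assumes "\<forall>\<alpha>\<in>Poly_Mapping.keys q. Poly_Mapping.keys \<alpha> \<subseteq> V \<and> mon_deg \<alpha> \<le> k" "y \<in> V"
  shows "hom k V (homog k q (var y))"
  unfolding homog_def
proof (intro hom_sum)
  fix \<alpha> assume a: "\<alpha> \<in> Poly_Mapping.keys q"
  then have kv: "Poly_Mapping.keys \<alpha> \<subseteq> V" and le: "mon_deg \<alpha> \<le> k" using assms by auto
  have "hom (\<Sum>i\<in>Poly_Mapping.keys \<alpha>. 1 * Poly_Mapping.lookup \<alpha> i) V (\<Prod>i\<in>Poly_Mapping.keys \<alpha>. var i ^ Poly_Mapping.lookup \<alpha> i)"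
    by (intro hom_prod hom_power hom_var) (use kv in auto)
  then have "hom (mon_deg \<alpha>) V (\<Prod>i\<in>Poly_Mapping.keys \<alpha>. var i ^ Poly_Mapping.lookup \<alpha> i)"
    by (simp add: mon_deg_def)
  moreover have "hom (1 * (k - mon_deg \<alpha>)) V (var y ^ (k - mon_deg \<alpha>))"
    by (intro hom_power hom_var assms(2))
  ultimately have "hom (mon_deg \<alpha> + (k - mon_deg \<alpha>)) V ((\<Prod>i\<in>Poly_Mapping.keys \<alpha>. var i ^ Poly_Mapping.lookup \<alpha> i) * var y ^ (k - mon_deg \<alpha>))"
    using hom_mult by fastforce
  then show "hom k V (const (Poly_Mapping.lookup q \<alpha>) * (\<Prod>i\<in>Poly_Mapping.keys \<alpha>. var i ^ Poly_Mapping.lookup \<alpha> i) * var y ^ (k - mon_deg \<alpha>))"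
    using le hom_cmult by (simp add: mult.assoc)
qed



definition ffac :: "nat \<Rightarrow> nat \<Rightarrow> real" where
  "ffac a b = (\<Prod>j<b. real (a - j))"

lemma ffac_0 [simp]: "ffac a 0 = 1" by (simp add: ffac_def)

lemma ffac_Suc: "ffac a (Suc b) = ffac a b * real (a - b)"
  by (simp add: ffac_def)

lemma ffac_Suc_Suc: "ffac (Suc a) (Suc b) = real (Suc a) * ffac a b"
  unfolding ffac_def by (subst prod.lessThan_Suc_shift) simp

lemma ffac_gt: "a < b \<Longrightarrow> ffac a b = 0"
  unfolding ffac_def by (rule prod_zero) (auto intro!: bexI[of _ a])

lemma ffac_self: "ffac a a = fact a"
  by (induction a) (simp_all add: ffac_Suc_Suc)

lemma ffac_nonneg: "0 \<le> ffac a b"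
  unfolding ffac_def by (rule prod_nonneg) auto

lemma ffac_shift: "1 \<le> a \<Longrightarrow> real a * ffac (a - 1) b = ffac a b * (real a - real b)"
proof -
  assume "1 \<le> a"
  then obtain a' where a: "a = Suc a'" by (cases a) auto
  have "real a * ffac (a - 1) b = ffac a (Suc b)" by (simp add: a ffac_Suc_Suc)
  also have "\<dots> = ffac a b * real (a - b)" by (rule ffac_Suc)
  also have "\<dots> = ffac a b * (real a - real b)"
  proof (cases "b \<le> a")
    case True then show ?thesis by (simp add: of_nat_diff)
  next
    case False then show ?thesis by (simp add: ffac_gt)
  qed
  finally show ?thesis .
qed

lemma ffac_le_pow: "ffac a b \<le> real a ^ b"
proof (induction b)
  case 0 then show ?case by simp
next
  case (Suc b)
  have "ffac a (Suc b) = ffac a b * real (a - b)" by (rule ffac_Suc)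
  also have "\<dots> \<le> real a ^ b * real a"
    by (rule mult_mono) (use Suc ffac_nonneg in auto)
  finally show ?case by (simp add: mult.commute)
qed

lemma ffac_bound:
  assumes "real a \<le> T"
  shows "T * (real a ^ b - ffac a b) \<le> real b ^ 2 * T ^ b"
proof (induction b)
  case 0 then show ?case by simp
next
  case (Suc b)
  have T0: "0 \<le> T" using assms by (meson of_nat_0_le_iff order_trans)
  have aT: "real a ^ b \<le> T ^ b" by (rule power_mono) (use assms in auto)
  show ?case
  proof (cases "b \<le> a")
    case True
    let ?f = "ffac a b"
    have eq: "real a ^ Suc b - ffac a (Suc b) = real a * (real a ^ b - ?f) + real b * ?f"
      by (simp add: ffac_Suc True of_nat_diff algebra_simps)
    have X0: "0 \<le> T * (real a ^ b - ?f)" using T0 ffac_le_pow[of a b] by simp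
    have "T * (real a ^ Suc b - ffac a (Suc b)) = T * (real a * (real a ^ b - ?f) + real b * ?f)"
      by (simp only: eq)
    also have "\<dots> = real a * (T * (real a ^ b - ?f)) + real b * T * ?f"
      by (simp add: algebra_simps)
    also have "\<dots> \<le> T * (real b ^ 2 * T ^ b) + real b * T * T ^ b"
    proof (rule add_mono)
      show "real a * (T * (real a ^ b - ?f)) \<le> T * (real b ^ 2 * T ^ b)"
        by (rule mult_mono) (use assms Suc X0 T0 in auto)
      show "real b * T * ?f \<le> real b * T * T ^ b"
        by (rule mult_left_mono) (use ffac_le_pow[of a b] aT T0 in auto)
    qed
    also have "\<dots> = (real b ^ 2 + real b) * T ^ Suc b" by (simp add: algebra_simps)
    also have "\<dots> \<le> real (Suc b) ^ 2 * T ^ Suc b"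
      by (rule mult_right_mono) (use T0 in \<open>auto simp: power2_eq_square algebra_simps\<close>)
    finally show ?thesis .
  next
    case False
    then have z: "ffac a (Suc b) = 0" by (intro ffac_gt) auto
    have "real a ^ Suc b = real a * real a ^ b" by simp
    also have "\<dots> \<le> real b * T ^ b"
      by (rule mult_mono) (use False aT T0 in auto)
    finally have "T * real a ^ Suc b \<le> T * (real b * T ^ b)" by (rule mult_left_mono) (rule T0)
    also have "\<dots> \<le> real (Suc b) ^ 2 * T ^ Suc b"
      using T0 by (simp add: power2_eq_square algebra_simps mult_right_mono)
    finally show ?thesis by (simp add: z)
  qed
qed

definition Pw :: "nat set \<Rightarrow> (nat \<Rightarrow> nat) \<Rightarrow> (nat \<Rightarrow> nat) \<Rightarrow> real" where
  "Pw V a b = (\<Prod>i\<in>V. real (a i) ^ b i)"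
definition Ff :: "nat set \<Rightarrow> (nat \<Rightarrow> nat) \<Rightarrow> (nat \<Rightarrow> nat) \<Rightarrow> real" where
  "Ff V a b = (\<Prod>i\<in>V. ffac (a i) (b i))"

lemma Ff_nonneg: "0 \<le> Ff V a b" unfolding Ff_def by (rule prod_nonneg) (simp add: ffac_nonneg)

lemma Ff_le_Pw: "Ff V a b \<le> Pw V a b"
  unfolding Ff_def Pw_def by (rule prod_mono) (simp add: ffac_nonneg ffac_le_pow)

lemma Pw_le: assumes "\<And>i. i \<in> V \<Longrightarrow> real (a i) \<le> T" shows "Pw V a b \<le> T ^ (\<Sum>i\<in>V. b i)"
  unfolding Pw_def power_sum by (rule prod_mono) (use assms in \<open>auto intro: power_mono\<close>)

lemma multi_bound:
  assumes "finite V" "\<And>i. i \<in> V \<Longrightarrow> real (a i) \<le> T"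
  shows "T * (Pw V a b - Ff V a b) \<le> (\<Sum>i\<in>V. real (b i) ^ 2) * T ^ (\<Sum>i\<in>V. b i)"
  using assms
proof (induction V rule: finite_induct)
  case empty then show ?case by (simp add: Pw_def Ff_def)
next
  case (insert k A)
  have T0: "0 \<le> T" using insert(4)[of k] by (meson insertI1 of_nat_0_le_iff order_trans)
  let ?p = "real (a k) ^ b k" and ?f = "ffac (a k) (b k)"
  let ?P = "Pw A a b" and ?F = "Ff A a b"
  have PA: "?P \<le> T ^ (\<Sum>i\<in>A. b i)" by (rule Pw_le) (use insert in auto)
  have fk: "?f \<le> T ^ b k" using ffac_le_pow[of "a k" "b k"] power_mono[of "real (a k)" T "b k"] insert(4)[of k] by auto
  have IH: "T * (?P - ?F) \<le> (\<Sum>i\<in>A. real (b i) ^ 2) * T ^ (\<Sum>i\<in>A. b i)" using insert by auto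
  have X0: "0 \<le> T * (?P - ?F)" using T0 Ff_le_Pw[of A a b] by simp
  have k1: "T * (?p - ?f) \<le> real (b k) ^ 2 * T ^ b k" by (rule ffac_bound) (use insert in auto)
  have "T * (Pw (insert k A) a b - Ff (insert k A) a b) = T * (?p - ?f) * ?P + ?f * (T * (?P - ?F))"
    using insert by (simp add: Pw_def Ff_def algebra_simps)
  also have "\<dots> \<le> real (b k) ^ 2 * T ^ b k * T ^ (\<Sum>i\<in>A. b i) + T ^ b k * ((\<Sum>i\<in>A. real (b i) ^ 2) * T ^ (\<Sum>i\<in>A. b i))"
  proof (rule add_mono)
    have h1: "0 \<le> T * (?p - ?f)" using T0 ffac_le_pow[of "a k" "b k"] by simp
    have h2: "0 \<le> ?P" unfolding Pw_def by (rule prod_nonneg) simp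
    show "T * (?p - ?f) * ?P \<le> real (b k) ^ 2 * T ^ b k * T ^ (\<Sum>i\<in>A. b i)"
      by (rule mult_mono[OF k1 PA]) (use T0 h2 in auto)
    show "?f * (T * (?P - ?F)) \<le> T ^ b k * ((\<Sum>i\<in>A. real (b i) ^ 2) * T ^ (\<Sum>i\<in>A. b i))"
      by (rule mult_mono[OF fk IH]) (use X0 ffac_nonneg[of "a k" "b k"] T0 in auto)
  qed
  also have "\<dots> = (\<Sum>i\<in>insert k A. real (b i) ^ 2) * T ^ (\<Sum>i\<in>insert k A. b i)"
    using insert by (simp add: algebra_simps power_add)
  finally show ?case .
qed



lemma lookup_minus_single: "Poly_Mapping.lookup (\<alpha> - Poly_Mapping.single j (1::nat)) i = Poly_Mapping.lookup \<alpha> i - (if i = j then 1 else 0)"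
  by (simp add: lookup_minus lookup_single when_def)

lemma add_single_eq_iff:
  assumes "1 \<le> Poly_Mapping.lookup \<alpha> j"
  shows "(\<beta> + Poly_Mapping.single j (1::nat) = \<alpha>) \<longleftrightarrow> \<beta> = \<alpha> - Poly_Mapping.single j 1"
proof
  assume h: "\<beta> + Poly_Mapping.single j 1 = \<alpha>"
  show "\<beta> = \<alpha> - Poly_Mapping.single j 1"
  proof (rule poly_mapping_eqI)
    fix i show "Poly_Mapping.lookup \<beta> i = Poly_Mapping.lookup (\<alpha> - Poly_Mapping.single j 1) i"
      unfolding lookup_minus_single h[symmetric] by (simp add: lookup_add lookup_single when_def)
  qed
next
  assume h: "\<beta> = \<alpha> - Poly_Mapping.single j 1"
  show "\<beta> + Poly_Mapping.single j 1 = \<alpha>"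
  proof (rule poly_mapping_eqI)
    fix i show "Poly_Mapping.lookup (\<beta> + Poly_Mapping.single j 1) i = Poly_Mapping.lookup \<alpha> i"
      unfolding h lookup_add lookup_minus_single using assms by (simp add: lookup_single when_def)
  qed
qed

lemmas lookup_minus_single' = lookup_minus_single[simplified]

lemma lookup_mult_var:
  "Poly_Mapping.lookup (Q * var j) \<alpha> =
     (if 1 \<le> Poly_Mapping.lookup \<alpha> j then Poly_Mapping.lookup Q (\<alpha> - Poly_Mapping.single j 1) else 0)"
proof -
  have "Q * var j = (\<Sum>\<beta>\<in>Poly_Mapping.keys Q. Poly_Mapping.single (\<beta> + Poly_Mapping.single j 1) (Poly_Mapping.lookup Q \<beta>))"
    by (subst prod_decomp) (simp add: var_def)
  then have L: "Poly_Mapping.lookup (Q * var j) \<alpha> = (\<Sum>\<beta>\<in>Poly_Mapping.keys Q. (if \<beta> + Poly_Mapping.single j 1 = \<alpha> then Poly_Mapping.lookup Q \<beta> else 0))"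
    by (simp add: lookup_sum lookup_single when_def)
  show ?thesis
  proof (cases "1 \<le> Poly_Mapping.lookup \<alpha> j")
    case True
    then have "Poly_Mapping.lookup (Q * var j) \<alpha> = (\<Sum>\<beta>\<in>Poly_Mapping.keys Q. (if \<beta> = \<alpha> - Poly_Mapping.single j 1 then Poly_Mapping.lookup Q \<beta> else 0))"
      unfolding L using add_single_eq_iff[OF True] by presburger
    also have "\<dots> = Poly_Mapping.lookup Q (\<alpha> - Poly_Mapping.single j 1)"
      by (simp add: in_keys_iff)
    finally show ?thesis using True by simp
  next
    case False
    have "\<beta> + Poly_Mapping.single j 1 \<noteq> \<alpha>" for \<beta>
    proof
      assume "\<beta> + Poly_Mapping.single j 1 = \<alpha>"
      then have "Poly_Mapping.lookup (\<beta> + Poly_Mapping.single j 1) j = Poly_Mapping.lookup \<alpha> j" by simp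
      then show False using False by (simp add: lookup_add)
    qed
    then show ?thesis unfolding L using False by simp
  qed
qed

definition SV :: "nat set \<Rightarrow> mpoly" where "SV V = (\<Sum>j\<in>V. var j)"

lemma lookup_mult_SV:
  "Poly_Mapping.lookup (Q * SV V) \<alpha> =
     (\<Sum>j\<in>V. if 1 \<le> Poly_Mapping.lookup \<alpha> j then Poly_Mapping.lookup Q (\<alpha> - Poly_Mapping.single j 1) else 0)"
  by (simp add: SV_def sum_distrib_left lookup_sum lookup_mult_var)

lemma hom_SV: "hom 1 V (SV V)"
  unfolding SV_def by (rule hom_sum) (rule hom_var)

definition Wf :: "nat set \<Rightarrow> (nat \<Rightarrow>\<^sub>0 nat) \<Rightarrow> real" where
  "Wf V \<alpha> = (\<Prod>i\<in>V. fact (Poly_Mapping.lookup \<alpha> i))"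

lemma Wf_pos: "0 < Wf V \<alpha>" unfolding Wf_def by (rule prod_pos) auto

lemma Wf_shift:
  assumes "finite V" "j \<in> V" "1 \<le> Poly_Mapping.lookup \<alpha> j"
  shows "Wf V \<alpha> = real (Poly_Mapping.lookup \<alpha> j) * Wf V (\<alpha> - Poly_Mapping.single j 1)"
proof -
  have eq: "(\<Prod>i\<in>V-{j}. fact (Poly_Mapping.lookup (\<alpha> - Poly_Mapping.single j 1) i) :: real) = (\<Prod>i\<in>V-{j}. fact (Poly_Mapping.lookup \<alpha> i))"
    by (rule prod.cong) (auto simp: lookup_minus_single lookup_minus_single')
  obtain a where a: "Poly_Mapping.lookup \<alpha> j = Suc a" using assms(3) by (cases "Poly_Mapping.lookup \<alpha> j") auto
  show ?thesis
    unfolding Wf_def using assms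
    by (simp add: prod.remove[OF assms(1,2)] eq lookup_minus_single lookup_minus_single' a)
qed

lemma Ff_shift:
  assumes "finite V" "j \<in> V" "1 \<le> Poly_Mapping.lookup \<alpha> j"
  shows "real (Poly_Mapping.lookup \<alpha> j) * Ff V (Poly_Mapping.lookup (\<alpha> - Poly_Mapping.single j 1)) b
         = Ff V (Poly_Mapping.lookup \<alpha>) b * (real (Poly_Mapping.lookup \<alpha> j) - real (b j))"
proof -
  have eq: "(\<Prod>i\<in>V-{j}. ffac (Poly_Mapping.lookup (\<alpha> - Poly_Mapping.single j 1) i) (b i)) = (\<Prod>i\<in>V-{j}. ffac (Poly_Mapping.lookup \<alpha> i) (b i))"
    by (rule prod.cong) (auto simp: lookup_minus_single lookup_minus_single')
  have "real (Poly_Mapping.lookup \<alpha> j) * ffac (Poly_Mapping.lookup \<alpha> j - 1) (b j) = ffac (Poly_Mapping.lookup \<alpha> j) (b j) * (real (Poly_Mapping.lookup \<alpha> j) - real (b j))"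
    by (rule ffac_shift) (rule assms(3))
  then show ?thesis
    unfolding Ff_def using assms
    by (simp add: prod.remove[OF assms(1,2)] eq lookup_minus_single lookup_minus_single')
qed

lemma Ff_zero_case:
  assumes "finite V" "j \<in> V" "Poly_Mapping.lookup \<alpha> j = 0"
  shows "Ff V (Poly_Mapping.lookup \<alpha>) b * (real (Poly_Mapping.lookup \<alpha> j) - real (b j)) = 0"
proof (cases "b j = 0")
  case True then show ?thesis using assms by simp
next
  case False
  then have "ffac (Poly_Mapping.lookup \<alpha> j) (b j) = 0" using assms by (intro ffac_gt) auto
  then have "Ff V (Poly_Mapping.lookup \<alpha>) b = 0" unfolding Ff_def using assms by (intro prod_zero) (auto intro!: bexI[of _ j])
  then show ?thesis by simp
qed

lemma mon_deg_minus_single: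
  assumes "1 \<le> Poly_Mapping.lookup \<alpha> j"
  shows "mon_deg (\<alpha> - Poly_Mapping.single j 1) + 1 = mon_deg \<alpha>"
proof -
  have "(\<alpha> - Poly_Mapping.single j 1) + Poly_Mapping.single j 1 = \<alpha>"
    using add_single_eq_iff[OF assms] by simp
  then show ?thesis using mon_deg_add[of "\<alpha> - Poly_Mapping.single j 1" "Poly_Mapping.single j 1"] by simp
qed

lemma keys_minus_single: "Poly_Mapping.keys (\<alpha> - Poly_Mapping.single j (1::nat)) \<subseteq> Poly_Mapping.keys \<alpha>"
  by (auto simp: in_keys_iff lookup_minus_single lookup_minus_single')

lemma real_mon_deg: "finite V \<Longrightarrow> Poly_Mapping.keys \<alpha> \<subseteq> V \<Longrightarrow> real (mon_deg \<alpha>) = (\<Sum>i\<in>V. real (Poly_Mapping.lookup \<alpha> i))"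
  by (simp add: mon_deg_superset)



lemma Ff_base:
  assumes "finite V" "Poly_Mapping.keys \<alpha> \<subseteq> V" "Poly_Mapping.keys \<beta> \<subseteq> V" "mon_deg \<alpha> = mon_deg \<beta>"
  shows "Ff V (Poly_Mapping.lookup \<alpha>) (Poly_Mapping.lookup \<beta>) = (if \<beta> = \<alpha> then Wf V \<alpha> else 0)"
proof (cases "\<beta> = \<alpha>")
  case True then show ?thesis by (simp add: Ff_def Wf_def ffac_self)
next
  case False
  show ?thesis
  proof (cases "\<exists>i\<in>V. Poly_Mapping.lookup \<alpha> i < Poly_Mapping.lookup \<beta> i")
    case True
    then obtain i where "i \<in> V" "Poly_Mapping.lookup \<alpha> i < Poly_Mapping.lookup \<beta> i" by blast
    then have "Ff V (Poly_Mapping.lookup \<alpha>) (Poly_Mapping.lookup \<beta>) = 0"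
      unfolding Ff_def using assms(1) by (intro prod_zero) (auto intro!: bexI[of _ i] ffac_gt)
    then show ?thesis using False by simp
  next
    case nlt: False
    have eq: "\<forall>i\<in>V. Poly_Mapping.lookup \<beta> i = Poly_Mapping.lookup \<alpha> i"
    proof (rule ccontr)
      assume "\<not> ?thesis"
      then obtain i where i: "i \<in> V" "Poly_Mapping.lookup \<beta> i < Poly_Mapping.lookup \<alpha> i" using nlt by force
      have "(\<Sum>i\<in>V. Poly_Mapping.lookup \<beta> i) < (\<Sum>i\<in>V. Poly_Mapping.lookup \<alpha> i)"
        by (rule sum_strict_mono_ex1) (use assms(1) nlt i in \<open>auto simp: not_less\<close>)
      then show False using assms by (simp add: mon_deg_superset)
    qed
    have "\<beta> = \<alpha>"
    proof (rule poly_mapping_eqI)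
      fix i show "Poly_Mapping.lookup \<beta> i = Poly_Mapping.lookup \<alpha> i"
      proof (cases "i \<in> V")
        case True then show ?thesis using eq by simp
      next
        case False
        then have "i \<notin> Poly_Mapping.keys \<alpha>" "i \<notin> Poly_Mapping.keys \<beta>" using assms(2,3) by blast+
        then show ?thesis by (simp add: in_keys_iff)
      qed
    qed
    then show ?thesis using False by simp
  qed
qed

lemma coeff_formula:
  assumes V: "finite V" and G: "hom D V G"
  shows "Poly_Mapping.keys \<alpha> \<subseteq> V \<Longrightarrow> mon_deg \<alpha> = M + D \<Longrightarrow>
    Poly_Mapping.lookup (G * SV V ^ M) \<alpha> * Wf V \<alpha> =
      fact M * (\<Sum>\<beta>\<in>Poly_Mapping.keys G. Poly_Mapping.lookup G \<beta> * Ff V (Poly_Mapping.lookup \<alpha>) (Poly_Mapping.lookup \<beta>))"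
proof (induction M arbitrary: \<alpha>)
  case 0
  have "(\<Sum>\<beta>\<in>Poly_Mapping.keys G. Poly_Mapping.lookup G \<beta> * Ff V (Poly_Mapping.lookup \<alpha>) (Poly_Mapping.lookup \<beta>))
      = (\<Sum>\<beta>\<in>Poly_Mapping.keys G. if \<beta> = \<alpha> then Poly_Mapping.lookup G \<beta> * Wf V \<alpha> else 0)"
  proof (rule sum.cong[OF refl])
    fix \<beta> assume "\<beta> \<in> Poly_Mapping.keys G"
    then have "Poly_Mapping.keys \<beta> \<subseteq> V" "mon_deg \<beta> = D" using G by (auto simp: hom_def)
    then show "Poly_Mapping.lookup G \<beta> * Ff V (Poly_Mapping.lookup \<alpha>) (Poly_Mapping.lookup \<beta>) = (if \<beta> = \<alpha> then Poly_Mapping.lookup G \<beta> * Wf V \<alpha> else 0)"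
      using Ff_base[OF V 0(1), of \<beta>] 0 by simp
  qed
  also have "\<dots> = Poly_Mapping.lookup G \<alpha> * Wf V \<alpha>"
    by (simp add: in_keys_iff)
  finally show ?case by simp
next
  case (Suc M)
  let ?e = "\<lambda>j. Poly_Mapping.single j (1::nat)"
  let ?a = "Poly_Mapping.lookup \<alpha>"
  let ?Q = "G * SV V ^ M"
  let ?T = "\<lambda>\<gamma>. (\<Sum>\<beta>\<in>Poly_Mapping.keys G. Poly_Mapping.lookup G \<beta> * Ff V (Poly_Mapping.lookup \<gamma>) (Poly_Mapping.lookup \<beta>))"
  have step: "(if 1 \<le> ?a j then Poly_Mapping.lookup ?Q (\<alpha> - ?e j) else 0) * Wf V \<alpha>
      = fact M * (\<Sum>\<beta>\<in>Poly_Mapping.keys G. Poly_Mapping.lookup G \<beta> * (Ff V ?a (Poly_Mapping.lookup \<beta>) * (real (?a j) - real (Poly_Mapping.lookup \<beta> j))))"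
    if j: "j \<in> V" for j
  proof (cases "1 \<le> ?a j")
    case True
    have k: "Poly_Mapping.keys (\<alpha> - ?e j) \<subseteq> V" using keys_minus_single[of \<alpha> j] Suc.prems by blast
    have m: "mon_deg (\<alpha> - ?e j) = M + D" using mon_deg_minus_single[OF True] Suc.prems by simp
    have "Poly_Mapping.lookup ?Q (\<alpha> - ?e j) * Wf V \<alpha> = real (?a j) * (Poly_Mapping.lookup ?Q (\<alpha> - ?e j) * Wf V (\<alpha> - ?e j))"
      by (simp add: Wf_shift[OF V j True])
    also have "\<dots> = real (?a j) * (fact M * ?T (\<alpha> - ?e j))" using Suc.IH[OF k m] by simp
    also have "\<dots> = fact M * (\<Sum>\<beta>\<in>Poly_Mapping.keys G. Poly_Mapping.lookup G \<beta> * (real (?a j) * Ff V (Poly_Mapping.lookup (\<alpha> - ?e j)) (Poly_Mapping.lookup \<beta>)))"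
      by (simp add: sum_distrib_left algebra_simps)
    also have "\<dots> = fact M * (\<Sum>\<beta>\<in>Poly_Mapping.keys G. Poly_Mapping.lookup G \<beta> * (Ff V ?a (Poly_Mapping.lookup \<beta>) * (real (?a j) - real (Poly_Mapping.lookup \<beta> j))))"
      using Ff_shift[OF V j True] by simp
    finally show ?thesis using True by simp
  next
    case False
    then have "?a j = 0" by simp
    then have "\<And>b. Ff V ?a b * (real (?a j) - real (b j)) = 0" using Ff_zero_case[OF V j] by blast
    then have "(\<Sum>\<beta>\<in>Poly_Mapping.keys G. Poly_Mapping.lookup G \<beta> * (Ff V ?a (Poly_Mapping.lookup \<beta>) * (real (?a j) - real (Poly_Mapping.lookup \<beta> j)))) = 0"
      by (intro sum.neutral) (simp only: mult_zero_right, simp)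
    then show ?thesis using False by simp
  qed
  have "Poly_Mapping.lookup (G * SV V ^ Suc M) \<alpha> * Wf V \<alpha> =
      (\<Sum>j\<in>V. (if 1 \<le> ?a j then Poly_Mapping.lookup ?Q (\<alpha> - ?e j) else 0) * Wf V \<alpha>)"
    by (simp add: power_Suc2 mult.assoc[symmetric] lookup_mult_SV sum_distrib_right del: power_Suc)
  also have "\<dots> = (\<Sum>j\<in>V. fact M * (\<Sum>\<beta>\<in>Poly_Mapping.keys G. Poly_Mapping.lookup G \<beta> * (Ff V ?a (Poly_Mapping.lookup \<beta>) * (real (?a j) - real (Poly_Mapping.lookup \<beta> j)))))"
    by (rule sum.cong[OF refl]) (rule step)
  also have "\<dots> = fact M * (\<Sum>\<beta>\<in>Poly_Mapping.keys G. \<Sum>j\<in>V. Poly_Mapping.lookup G \<beta> * (Ff V ?a (Poly_Mapping.lookup \<beta>) * (real (?a j) - real (Poly_Mapping.lookup \<beta> j))))"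
    by (simp only: sum_distrib_left[of "fact M", symmetric]) (rule arg_cong[where f="\<lambda>x. fact M * x"], rule sum.swap)
  also have "\<dots> = fact M * (\<Sum>\<beta>\<in>Poly_Mapping.keys G. Poly_Mapping.lookup G \<beta> * Ff V ?a (Poly_Mapping.lookup \<beta>) * (\<Sum>j\<in>V. (real (?a j) - real (Poly_Mapping.lookup \<beta> j))))"
  proof -
    have "\<And>\<beta>. Poly_Mapping.lookup G \<beta> * Ff V ?a (Poly_Mapping.lookup \<beta>) * (\<Sum>j\<in>V. (real (?a j) - real (Poly_Mapping.lookup \<beta> j)))
       = (\<Sum>j\<in>V. Poly_Mapping.lookup G \<beta> * (Ff V ?a (Poly_Mapping.lookup \<beta>) * (real (?a j) - real (Poly_Mapping.lookup \<beta> j))))"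
      by (simp add: sum_distrib_left mult.assoc)
    then show ?thesis by presburger
  qed
  also have "\<dots> = fact M * (\<Sum>\<beta>\<in>Poly_Mapping.keys G. Poly_Mapping.lookup G \<beta> * Ff V ?a (Poly_Mapping.lookup \<beta>) * real (Suc M))"
  proof -
    have "(\<Sum>j\<in>V. (real (?a j) - real (Poly_Mapping.lookup \<beta> j))) = real (Suc M)" if "\<beta> \<in> Poly_Mapping.keys G" for \<beta>
    proof -
      have kb: "Poly_Mapping.keys \<beta> \<subseteq> V" and db: "mon_deg \<beta> = D" using G that by (auto simp: hom_def)
      have "(\<Sum>j\<in>V. (real (?a j) - real (Poly_Mapping.lookup \<beta> j))) = real (mon_deg \<alpha>) - real (mon_deg \<beta>)"
        by (simp only: sum_subtractf real_mon_deg[OF V Suc.prems(1)] real_mon_deg[OF V kb])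
      also have "\<dots> = real (Suc M)" using Suc.prems(2) db by simp
      finally show ?thesis .
    qed
    then show ?thesis by (intro arg_cong[where f="\<lambda>x. fact M * x"] sum.cong) auto
  qed
  also have "\<dots> = fact (Suc M) * ?T \<alpha>"
  proof -
    have "fact (Suc M) = (fact M :: real) * real (Suc M)" by (simp add: algebra_simps)
    then show ?thesis by (simp add: sum_distrib_left sum_distrib_right algebra_simps)
  qed
  finally show ?case .
qed



lemma eval_as_Pw:
  assumes "hom D V G" "finite V"
  shows "eval G (\<lambda>i. real (a i)) = (\<Sum>\<beta>\<in>Poly_Mapping.keys G. Poly_Mapping.lookup G \<beta> * Pw V a (Poly_Mapping.lookup \<beta>))"
  unfolding eval_def Pw_def
proof (rule sum.cong[OF refl])
  fix \<beta> assume "\<beta> \<in> Poly_Mapping.keys G"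
  then have "Poly_Mapping.keys \<beta> \<subseteq> V" using assms by (auto simp: hom_def)
  then have "(\<Prod>i\<in>Poly_Mapping.keys \<beta>. real (a i) ^ Poly_Mapping.lookup \<beta> i) = (\<Prod>i\<in>V. real (a i) ^ Poly_Mapping.lookup \<beta> i)"
    by (intro prod.mono_neutral_left) (use assms(2) in \<open>auto simp: in_keys_iff\<close>)
  then show "Poly_Mapping.lookup G \<beta> * (\<Prod>i\<in>Poly_Mapping.keys \<beta>. real (a i) ^ Poly_Mapping.lookup \<beta> i) =
    Poly_Mapping.lookup G \<beta> * (\<Prod>i\<in>V. real (a i) ^ Poly_Mapping.lookup \<beta> i)" by simp
qed

lemma sum_sq_le: "finite V \<Longrightarrow> (\<Sum>i\<in>V. real (b i) ^ 2) \<le> real (sum b V) ^ 2"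
proof -
  assume V: "finite V"
  have "(\<Sum>i\<in>V. real (b i) ^ 2) \<le> (\<Sum>i\<in>V. real (sum b V) * real (b i))"
  proof (rule sum_mono)
    fix i assume "i \<in> V"
    then have "b i \<le> sum b V" using V by (intro member_le_sum) auto
    then have "real (b i) \<le> real (sum b V)" by linarith
    then have "real (b i) * real (b i) \<le> real (sum b V) * real (b i)" by (rule mult_right_mono) simp
    then show "real (b i) ^ 2 \<le> real (sum b V) * real (b i)"
      by (simp only: power2_eq_square)
  qed
  also have "\<dots> = real (sum b V) ^ 2" by (simp add: sum_distrib_left[symmetric] power2_eq_square)
  finally show ?thesis .
qed

theorem polya:
  assumes V: "finite V" and G: "hom D V G" and D1: "1 \<le> D"
    and K: "finite K" "Poly_Mapping.keys G \<subseteq> K" "(\<Sum>\<beta>\<in>K. \<bar>Poly_Mapping.lookup G \<beta>\<bar>) \<le> L"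
    and pos: "\<And>x. (\<forall>i. 0 \<le> x i) \<Longrightarrow> (\<Sum>i\<in>V. x i) = 1 \<Longrightarrow> lam \<le> eval G x"
    and big: "L * real D ^ 2 \<le> real (M + D) * lam"
  shows "nn (G * SV V ^ M)"
  unfolding nn_def
proof
  fix \<alpha>
  show "0 \<le> Poly_Mapping.lookup (G * SV V ^ M) \<alpha>"
  proof (cases "\<alpha> \<in> Poly_Mapping.keys (G * SV V ^ M)")
    case False then show ?thesis by (simp add: in_keys_iff)
  next
    case True
    have "hom (D + 1 * M) V (G * SV V ^ M)" by (rule hom_mult[OF G hom_power[OF hom_SV]])
    then have ka: "Poly_Mapping.keys \<alpha> \<subseteq> V" and da: "mon_deg \<alpha> = M + D"
      using True by (auto simp: hom_def)
    define T where "T = real (M + D)"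
    have T0: "0 < T" using D1 by (simp add: T_def)
    let ?a = "Poly_Mapping.lookup \<alpha>"
    let ?S = "\<Sum>\<beta>\<in>Poly_Mapping.keys G. Poly_Mapping.lookup G \<beta> * Ff V ?a (Poly_Mapping.lookup \<beta>)"
    let ?SP = "\<Sum>\<beta>\<in>Poly_Mapping.keys G. Poly_Mapping.lookup G \<beta> * Pw V ?a (Poly_Mapping.lookup \<beta>)"
    let ?SD = "\<Sum>\<beta>\<in>Poly_Mapping.keys G. Poly_Mapping.lookup G \<beta> * (Pw V ?a (Poly_Mapping.lookup \<beta>) - Ff V ?a (Poly_Mapping.lookup \<beta>))"
    have aT: "real (?a i) \<le> T" if "i \<in> V" for i
    proof -
      have "?a i \<le> (\<Sum>i\<in>V. ?a i)" using V that by (intro member_le_sum) auto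
      also have "\<dots> = mon_deg \<alpha>" using mon_deg_superset[OF V ka] by simp
      finally show ?thesis using da by (simp add: T_def)
    qed
    define x where "x = (\<lambda>i. real (?a i) / T)"
    have x0: "\<forall>i. 0 \<le> x i" using T0 by (simp add: x_def)
    have x1: "(\<Sum>i\<in>V. x i) = 1"
      using T0 real_mon_deg[OF V ka] da by (simp add: x_def sum_divide_distrib[symmetric] T_def)
    have "?SP = eval G (\<lambda>i. real (?a i))" by (rule eval_as_Pw[OF G V, symmetric])
    also have "(\<lambda>i. real (?a i)) = (\<lambda>i. T * x i)" using T0 by (simp add: x_def)
    also have "eval G (\<lambda>i. T * x i) = T ^ D * eval G x" by (rule eval_scale[OF G])
    finally have SP: "T ^ D * lam \<le> ?SP" using pos[OF x0 x1] T0 by simp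
    have SD: "T * ?SD \<le> L * real D ^ 2 * T ^ D"
    proof -
      have "T * ?SD = (\<Sum>\<beta>\<in>Poly_Mapping.keys G. Poly_Mapping.lookup G \<beta> * (T * (Pw V ?a (Poly_Mapping.lookup \<beta>) - Ff V ?a (Poly_Mapping.lookup \<beta>))))"
        by (simp add: sum_distrib_left algebra_simps)
      also have "\<dots> \<le> (\<Sum>\<beta>\<in>Poly_Mapping.keys G. \<bar>Poly_Mapping.lookup G \<beta>\<bar> * (real D ^ 2 * T ^ D))"
      proof (rule sum_mono)
        fix \<beta> assume b: "\<beta> \<in> Poly_Mapping.keys G"
        then have kb: "Poly_Mapping.keys \<beta> \<subseteq> V" and db: "mon_deg \<beta> = D" using G by (auto simp: hom_def)
        have sb: "(\<Sum>i\<in>V. Poly_Mapping.lookup \<beta> i) = D" using mon_deg_superset[OF V kb] db by simp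
        have mb: "T * (Pw V ?a (Poly_Mapping.lookup \<beta>) - Ff V ?a (Poly_Mapping.lookup \<beta>)) \<le> (\<Sum>i\<in>V. real (Poly_Mapping.lookup \<beta> i) ^ 2) * T ^ D"
          using multi_bound[of V "?a" T "Poly_Mapping.lookup \<beta>"] V aT sb by simp
        also have "\<dots> \<le> real D ^ 2 * T ^ D"
          by (rule mult_right_mono) (use sum_sq_le[OF V, of "Poly_Mapping.lookup \<beta>"] sb T0 in auto)
        finally have m2: "T * (Pw V ?a (Poly_Mapping.lookup \<beta>) - Ff V ?a (Poly_Mapping.lookup \<beta>)) \<le> real D ^ 2 * T ^ D" .
        have nn0: "0 \<le> T * (Pw V ?a (Poly_Mapping.lookup \<beta>) - Ff V ?a (Poly_Mapping.lookup \<beta>))"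
          using T0 Ff_le_Pw[of V ?a "Poly_Mapping.lookup \<beta>"] by simp
        have "Poly_Mapping.lookup G \<beta> * (T * (Pw V ?a (Poly_Mapping.lookup \<beta>) - Ff V ?a (Poly_Mapping.lookup \<beta>)))
            \<le> \<bar>Poly_Mapping.lookup G \<beta>\<bar> * (T * (Pw V ?a (Poly_Mapping.lookup \<beta>) - Ff V ?a (Poly_Mapping.lookup \<beta>)))"
          by (rule mult_right_mono) (use nn0 in auto)
        also have "\<dots> \<le> \<bar>Poly_Mapping.lookup G \<beta>\<bar> * (real D ^ 2 * T ^ D)"
          by (rule mult_left_mono[OF m2]) simp
        finally show "Poly_Mapping.lookup G \<beta> * (T * (Pw V ?a (Poly_Mapping.lookup \<beta>) - Ff V ?a (Poly_Mapping.lookup \<beta>)))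
            \<le> \<bar>Poly_Mapping.lookup G \<beta>\<bar> * (real D ^ 2 * T ^ D)" .
      qed
      also have "\<dots> = (\<Sum>\<beta>\<in>Poly_Mapping.keys G. \<bar>Poly_Mapping.lookup G \<beta>\<bar>) * (real D ^ 2 * T ^ D)"
        by (simp add: sum_distrib_right)
      also have "\<dots> \<le> L * (real D ^ 2 * T ^ D)"
      proof (rule mult_right_mono)
        have "(\<Sum>\<beta>\<in>Poly_Mapping.keys G. \<bar>Poly_Mapping.lookup G \<beta>\<bar>) \<le> (\<Sum>\<beta>\<in>K. \<bar>Poly_Mapping.lookup G \<beta>\<bar>)"
          by (rule sum_mono2) (use K in auto)
        then show "(\<Sum>\<beta>\<in>Poly_Mapping.keys G. \<bar>Poly_Mapping.lookup G \<beta>\<bar>) \<le> L" using K(3) by linarith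
        show "0 \<le> real D ^ 2 * T ^ D" using T0 by simp
      qed
      finally show ?thesis by (simp add: mult.assoc)
    qed
    have eqS: "?S = ?SP - ?SD"
      by (simp add: sum_subtractf[symmetric] algebra_simps)
    have "T * ?S = T * ?SP - T * ?SD" by (simp add: eqS algebra_simps)
    also have "\<dots> \<ge> T * (T ^ D * lam) - L * real D ^ 2 * T ^ D"
    proof -
      have "T * (T ^ D * lam) \<le> T * ?SP" using SP T0 by (rule mult_left_mono[OF _ less_imp_le])
      then show ?thesis using SD by linarith
    qed
    finally have "T ^ D * (T * lam - L * real D ^ 2) \<le> T * ?S" by (simp add: algebra_simps)
    moreover have "0 \<le> T ^ D * (T * lam - L * real D ^ 2)"
      using big T0 by (simp add: T_def)
    ultimately have "0 \<le> T * ?S" by linarith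
    then have S0: "0 \<le> ?S" using T0 by (simp add: zero_le_mult_iff)
    have F: "Poly_Mapping.lookup (G * SV V ^ M) \<alpha> * Wf V \<alpha> = fact M * ?S"
      by (rule coeff_formula[OF V G ka da])
    have "0 \<le> Poly_Mapping.lookup (G * SV V ^ M) \<alpha> * Wf V \<alpha>" unfolding F using S0 by simp
    then show ?thesis using Wf_pos[of V \<alpha>] by (simp add: zero_le_mult_iff)
  qed
qed



lemma continuous_eval: "continuous_on UNIV (\<lambda>z. eval q z)"
  unfolding eval_def
  by (intro continuous_intros continuous_on_product_coordinates)

lemma compact_box: "compact (PiE UNIV (\<lambda>i::nat. if i < N then {-1..1::real} else {0}))"
proof -
  have "compactin (product_topology (\<lambda>i. euclidean) UNIV) (PiE UNIV (\<lambda>i::nat. if i < N then {-1..1::real} else {0}))"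
    by (subst compactin_PiE) (auto simp: compactin_euclidean_iff)
  then show ?thesis by (simp add: euclidean_product_topology compactin_euclidean_iff)
qed

lemma hom_eval_lower:
  assumes H: "hom D {..<N} H" and D1: "1 \<le> D" and N1: "1 \<le> N"
    and pos: "\<And>z. (\<Sum>i<N. z i ^ 2) \<noteq> 0 \<Longrightarrow> 0 < eval H z"
  shows "\<exists>c>0. \<forall>z. c * sqrt (\<Sum>i<N. z i ^ 2) ^ D \<le> eval H z"
proof -
  define B where "B = PiE UNIV (\<lambda>i::nat. if i < N then {-1..1::real} else {0})"
  define K where "K = B \<inter> {z. (\<Sum>i<N. z i ^ 2) = 1}"
  have cK: "compact K" unfolding K_def B_def
    by (intro compact_Int_closed compact_box closed_Collect_eq continuous_intros continuous_on_product_coordinates)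
  define e where "e = (\<lambda>i::nat. if i = 0 then 1 else (0::real))"
  have "(\<Sum>i<N. e i ^ 2) = (\<Sum>i<N. if i = 0 then 1 else 0)" by (rule sum.cong) (auto simp: e_def)
  also have "\<dots> = 1" using N1 by simp
  finally have "e \<in> K" using N1 by (auto simp: K_def B_def e_def PiE_iff)
  then have neK: "K \<noteq> {}" by blast
  obtain z0 where z0: "z0 \<in> K" "\<And>y. y \<in> K \<Longrightarrow> eval H z0 \<le> eval H y"
    using continuous_attains_inf[OF cK neK continuous_on_subset[OF continuous_eval subset_UNIV]] by blast
  have c0: "0 < eval H z0" using z0(1) by (intro pos) (auto simp: K_def)
  have "\<forall>z::nat\<Rightarrow>real. eval H z0 * sqrt (\<Sum>i<N. z i ^ 2) ^ D \<le> eval H z"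
  proof
    fix z :: "nat \<Rightarrow> real"
    define w where "w = (\<lambda>i. if i < N then z i else 0)"
    have ew: "eval H z = eval H w" by (rule eval_cong[OF H]) (auto simp: w_def)
    have sw: "(\<Sum>i<N. z i ^ 2) = (\<Sum>i<N. w i ^ 2)" by (simp add: w_def)
    define \<rho> where "\<rho> = sqrt (\<Sum>i<N. w i ^ 2)"
    have \<rho>0: "0 \<le> \<rho>" by (simp add: \<rho>_def sum_nonneg)
    show "eval H z0 * sqrt (\<Sum>i<N. z i ^ 2) ^ D \<le> eval H z"
    proof (cases "\<rho> = 0")
      case True
      then have "\<forall>i\<in>{..<N}. w i ^ 2 = 0" unfolding \<rho>_def by (subst sum_nonneg_eq_0_iff[symmetric]) auto
      then have "w = (\<lambda>i. 0 * w i)" by (auto simp: w_def fun_eq_iff)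
      then have "eval H w = 0 ^ D * eval H w" using eval_scale[OF H, of 0 w] by metis
      moreover have "(0::real) ^ D = 0" using D1 by simp
      ultimately have "eval H w = 0" by simp
      moreover have "0 < D" using D1 by simp
      ultimately show ?thesis using True ew sw by (simp add: \<rho>_def zero_power)
    next
      case False
      then have \<rho>p: "0 < \<rho>" using \<rho>0 by simp
      define u where "u = (\<lambda>i. w i / \<rho>)"
      have sq: "\<rho> ^ 2 = (\<Sum>i<N. w i ^ 2)" unfolding \<rho>_def by (simp add: sum_nonneg)
      have su: "(\<Sum>i<N. u i ^ 2) = 1"
        using \<rho>p sq[symmetric] by (simp add: u_def power_divide sum_divide_distrib[symmetric])
      have uB: "u \<in> B"
      proof -
        have "\<bar>u i\<bar> \<le> 1" if "i < N" for i
        proof -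
          have "u i ^ 2 \<le> (\<Sum>i<N. u i ^ 2)" using that by (intro member_le_sum) auto
          then have "u i ^ 2 \<le> 1 ^ 2" using su by simp
          then show ?thesis using abs_le_square_iff[of "u i" 1] by simp
        qed
        then have "\<forall>i<N. -1 \<le> u i \<and> u i \<le> 1" by (auto simp: abs_le_iff)
        then show ?thesis by (auto simp: B_def PiE_iff u_def w_def)
      qed
      have "u \<in> K" using uB su by (simp add: K_def)
      then have le: "eval H z0 \<le> eval H u" by (rule z0(2))
      have "w = (\<lambda>i. \<rho> * u i)" using \<rho>p by (auto simp: u_def fun_eq_iff)
      then have "eval H w = \<rho> ^ D * eval H u" using eval_scale[OF H, of \<rho> u] by metis
      moreover have "eval H z0 * \<rho> ^ D \<le> \<rho> ^ D * eval H u" using mult_right_mono[OF le zero_le_power[OF \<rho>0, of D]] by (simp add: mult.commute)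
      ultimately show ?thesis using ew sw by (simp add: \<rho>_def)
    qed
  qed
  then show ?thesis using c0 by blast
qed



lemma hom_cong: "hom D V q \<Longrightarrow> D = D' \<Longrightarrow> hom D' V q" by simp

lemma deg_bounds:
  fixes m d :: nat
  assumes d_def: "d = max 1 ((Max (insert (total_deg p) (total_deg ` g ` {1..m})) + 1) div 2)"
  shows "1 \<le> d" "\<forall>\<alpha>\<in>Poly_Mapping.keys p. mon_deg \<alpha> \<le> 2*d"
    "\<forall>i\<in>{1..m}. \<forall>\<alpha>\<in>Poly_Mapping.keys (g i). mon_deg \<alpha> \<le> 2*d"
proof -
  define Mx where "Mx = Max (insert (total_deg p) (total_deg ` g ` {1..m}))"
  have fin: "finite (insert (total_deg p) (total_deg ` g ` {1..m}))" by (intro finite.insertI finite_imageI) simp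
  have Mx: "Mx \<le> 2 * d" unfolding d_def Mx_def[symmetric] by linarith
  show "1 \<le> d" using d_def by simp
  show "\<forall>\<alpha>\<in>Poly_Mapping.keys p. mon_deg \<alpha> \<le> 2*d"
  proof
    fix \<alpha> assume "\<alpha> \<in> Poly_Mapping.keys p"
    then have "mon_deg \<alpha> \<le> total_deg p" by (rule mon_deg_le_total)
    also have "\<dots> \<le> Mx" unfolding Mx_def by (rule Max_ge[OF fin]) simp
    finally show "mon_deg \<alpha> \<le> 2*d" using Mx by linarith
  qed
  show "\<forall>i\<in>{1..m}. \<forall>\<alpha>\<in>Poly_Mapping.keys (g i). mon_deg \<alpha> \<le> 2*d"
  proof (intro ballI)
    fix i \<alpha> assume i: "i \<in> {1..m}" and "\<alpha> \<in> Poly_Mapping.keys (g i)"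
    then have "mon_deg \<alpha> \<le> total_deg (g i)" by (intro mon_deg_le_total)
    also have "\<dots> \<le> Mx" unfolding Mx_def by (rule Max_ge[OF fin]) (use i in simp)
    finally show "mon_deg \<alpha> \<le> 2*d" using Mx by linarith
  qed
qed

lemma hom_H:
  assumes vars_p: "\<forall>\<alpha>\<in>Poly_Mapping.keys p. Poly_Mapping.keys \<alpha> \<subseteq> {..<n}"
    and vars_g: "\<forall>i\<in>{1..m}. \<forall>\<alpha>\<in>Poly_Mapping.keys (g i). Poly_Mapping.keys \<alpha> \<subseteq> {..<n}"
    and d1: "1 \<le> d" and dp: "\<forall>\<alpha>\<in>Poly_Mapping.keys p. mon_deg \<alpha> \<le> 2*d"
    and dg: "\<forall>i\<in>{1..m}. \<forall>\<alpha>\<in>Poly_Mapping.keys (g i). mon_deg \<alpha> \<le> 2*d"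
  shows "hom (4*d) {..<n+m+3} (hform n m d p g R \<eta> \<beta>)"
proof -
  let ?V = "{..<n+m+3}"
  let ?y = "var (n+m+2)"
  have vy: "hom 1 ?V ?y" by (rule hom_var) simp
  have vs: "hom 1 ?V (var (n+i))" if "i \<le> m+1" for i by (rule hom_var) (use that in simp)
  have y22: "hom (2*d-2) ?V (?y ^ (2*d-2))" using hom_power[OF vy, of "2*d-2"] by simp
  have s2: "hom 2 ?V (var (n+i) ^ 2)" if "i \<le> m+1" for i using hom_power[OF vs[OF that], of 2] by simp
  have s2y: "hom (2*d) ?V (var (n+i) ^ 2 * ?y ^ (2*d-2))" if "i \<le> m+1" for i
    using hom_mult[OF s2[OF that] y22] d1 by (simp add: hom_cong)
  have hp: "hom (2*d) ?V (homog (2*d) p ?y)"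
  proof (rule hom_homog)
    show "\<forall>\<alpha>\<in>Poly_Mapping.keys p. Poly_Mapping.keys \<alpha> \<subseteq> ?V \<and> mon_deg \<alpha> \<le> 2 * d"
      using vars_p dp by force
  qed simp
  have hg: "hom (2*d) ?V (homog (2*d) (g i) ?y)" if "i \<in> {1..m}" for i
  proof (rule hom_homog)
    show "\<forall>\<alpha>\<in>Poly_Mapping.keys (g i). Poly_Mapping.keys \<alpha> \<subseteq> ?V \<and> mon_deg \<alpha> \<le> 2 * d"
      using vars_g dg that by force
  qed simp
  have sq: "hom (4*d) ?V (q ^ 2)" if "hom (2*d) ?V q" for q
    using hom_power[OF that, of 2] by (simp add: mult.commute)
  have t1: "hom (4*d) ?V ((homog (2*d) p ?y + var (n+0) ^ 2 * ?y ^ (2*d-2)) ^ 2)"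
    by (intro sq hom_add hp s2y) simp
  have t2: "hom (4*d) ?V (\<Sum>i=1..m. (homog (2*d) (g i) ?y - var (n+i) ^ 2 * ?y ^ (2*d-2)) ^ 2)"
    by (intro hom_sum sq hom_diff hg s2y) auto
  have a1: "hom (2*d) ?V (const c * ?y ^ (2*d))" for c
    by (rule hom_cmult) (use hom_power[OF vy, of "2*d"] in simp)
  have xs: "hom 2 ?V ((\<Sum>j<n. var j ^ 2) + (\<Sum>i=0..m. var (n+i) ^ 2))"
  proof (intro hom_add hom_sum)
    fix j assume "j \<in> {..<n}"
    then show "hom 2 ?V (var j ^ 2)" using hom_power[OF hom_var[of j ?V], of 2] by simp
  next
    fix i assume "i \<in> {0..m}" then show "hom 2 ?V (var (n+i) ^ 2)" by (intro s2) simp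
  qed
  have a2: "hom (2*d) ?V (((\<Sum>j<n. var j ^ 2) + (\<Sum>i=0..m. var (n+i) ^ 2)) ^ d)"
    using hom_power[OF xs, of d] by simp
  have a3: "hom (2*d) ?V (var (n+(m+1)) ^ (2*d))"
    using hom_power[OF vs[of "m+1"], of "2*d"] by simp
  have t3: "hom (4*d) ?V ((const c * ?y ^ (2*d) - ((\<Sum>j<n. var j ^ 2) + (\<Sum>i=0..m. var (n+i) ^ 2)) ^ d
              - var (n+(m+1)) ^ (2*d)) ^ 2)" for c
    by (intro sq hom_diff a1 a2 a3)
  show ?thesis unfolding hform_def Let_def
    using hom_add[OF hom_add[OF t1 t2] t3] by simp
qed

lemma eval_homog1:
  assumes "z y = 1"
  shows "eval (homog k q (var y)) z = eval q z"
  using assms by (simp add: homog_def) (simp add: eval_def)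

lemma eval_H:
  "eval (hform n m d p g R \<eta> \<beta>) z =
    (eval (homog (2*d) p (var (n+m+2))) z + z n ^ 2 * z (n+m+2) ^ (2*d-2)) ^ 2
    + (\<Sum>i=1..m. (eval (homog (2*d) (g i) (var (n+m+2))) z - z (n+i) ^ 2 * z (n+m+2) ^ (2*d-2)) ^ 2)
    + ((R + (\<Sum>i=1..m. \<eta> i) + \<beta>) ^ d * z (n+m+2) ^ (2*d)
        - ((\<Sum>j<n. z j ^ 2) + (\<Sum>i=0..m. z (n+i) ^ 2)) ^ d - z (n+(m+1)) ^ (2*d)) ^ 2"
  by (simp add: hform_def Let_def)



lemma eval_cong_vars:
  assumes "\<forall>\<alpha>\<in>Poly_Mapping.keys q. Poly_Mapping.keys \<alpha> \<subseteq> V" "\<And>i. i \<in> V \<Longrightarrow> x i = y i"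
  shows "eval q x = eval q y"
  unfolding eval_def
proof (rule sum.cong[OF refl], rule arg_cong[where f="\<lambda>u. _ * u"], rule prod.cong[OF refl])
  fix \<alpha> i assume "\<alpha> \<in> Poly_Mapping.keys q" "i \<in> Poly_Mapping.keys \<alpha>"
  then have "i \<in> V" using assms(1) by auto
  then show "x i ^ Poly_Mapping.lookup \<alpha> i = y i ^ Poly_Mapping.lookup \<alpha> i" using assms(2) by simp
qed

lemma sq_sum_zero:
  fixes a c :: real
  assumes "a ^ 2 + (\<Sum>i\<in>I. b i ^ 2) + c ^ 2 = 0" "finite I"
  shows "a = 0" "\<forall>i\<in>I. b i = 0" "c = 0"
proof -
  have s0: "0 \<le> (\<Sum>i\<in>I. b i ^ 2)" by (rule sum_nonneg) simp
  have "a ^ 2 = 0" "(\<Sum>i\<in>I. b i ^ 2) = 0" "c ^ 2 = 0"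
    using assms(1) s0 zero_le_power2[of a] zero_le_power2[of c] by linarith+
  then show "a = 0" "c = 0" "\<forall>i\<in>I. b i = 0"
    using sum_nonneg_eq_0_iff[OF assms(2), of "\<lambda>i. b i ^ 2"] by auto
qed

lemma eval_H_nonneg: "0 \<le> eval (hform n m d p g R \<eta> \<beta>) z"
  unfolding eval_H by (intro add_nonneg_nonneg sum_nonneg) auto

lemma H_pos:
  assumes vars_p: "\<forall>\<alpha>\<in>Poly_Mapping.keys p. Poly_Mapping.keys \<alpha> \<subseteq> {..<n}"
    and vars_g: "\<forall>i\<in>{1..m}. \<forall>\<alpha>\<in>Poly_Mapping.keys (g i). Poly_Mapping.keys \<alpha> \<subseteq> {..<n}"
    and d1: "1 \<le> d" and dp: "\<forall>\<alpha>\<in>Poly_Mapping.keys p. mon_deg \<alpha> \<le> 2*d"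
    and dg: "\<forall>i\<in>{1..m}. \<forall>\<alpha>\<in>Poly_Mapping.keys (g i). mon_deg \<alpha> \<le> 2*d"
    and ppos: "\<forall>x\<in>semialg n m g. eval p x > 0"
    and nz: "(\<Sum>i<n+m+3. z i ^ 2) \<noteq> 0"
  shows "0 < eval (hform n m d p g R \<eta> \<beta>) z"
proof (rule ccontr)
  let ?H = "hform n m d p g R \<eta> \<beta>"
  let ?T = "R + (\<Sum>i=1..m. \<eta> i) + \<beta>"
  have hH: "hom (4*d) {..<n+m+3} ?H" by (rule hom_H[OF vars_p vars_g d1 dp dg])
  assume "\<not> 0 < eval ?H z"
  then have H0: "eval ?H z = 0" using eval_H_nonneg[of n m d p g R \<eta> \<beta> z] by linarith
  show False
  proof (cases "z (n+m+2) = 0")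
    case False
    define Y where "Y = z (n+m+2)"
    define z' where "z' = (\<lambda>i. (1 / Y) * z i)"
    have "eval ?H z' = (1/Y) ^ (4*d) * eval ?H z" unfolding z'_def by (rule eval_scale[OF hH])
    then have H0': "eval ?H z' = 0" using H0 by simp
    have y1: "z' (n+m+2) = 1" using False by (simp add: z'_def Y_def)
    have E: "(eval p z' + z' n ^ 2) ^ 2 + (\<Sum>i\<in>{1..m}. (eval (g i) z' - z' (n+i) ^ 2) ^ 2) + ((?T) ^ d - ((\<Sum>j<n. z' j ^ 2) + (\<Sum>i=0..m. z' (n+i) ^ 2)) ^ d - z' (n+(m+1)) ^ (2*d)) ^ 2 = 0"
      using H0' unfolding eval_H eval_homog1[of z' "n+m+2", OF y1] y1 by simp
    have e1: "eval p z' + z' n ^ 2 = 0" using sq_sum_zero(1)[OF E] by simp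
    have e2: "\<forall>i\<in>{1..m}. eval (g i) z' - z' (n+i) ^ 2 = 0" using sq_sum_zero(2)[OF E] by simp
    define x where "x = (\<lambda>i. if i < n then z' i else 0)"
    have px: "eval p x = eval p z'" by (rule eval_cong_vars[OF vars_p]) (simp add: x_def)
    have gx: "eval (g i) x = eval (g i) z'" if "i \<in> {1..m}" for i
      by (rule eval_cong_vars[of _ "{..<n}"]) (use vars_g that in \<open>auto simp: x_def\<close>)
    have "x \<in> semialg n m g"
      unfolding semialg_def using e2 gx by (auto simp: x_def)
    then have "eval p x > 0" using ppos by blast
    moreover have "eval p x \<le> 0" using px e1 by (smt (verit) zero_le_power2)
    ultimately show False by simp
  next
    case True
    have E: "(eval (homog (2*d) p (var (n+m+2))) z + z n ^ 2 * z (n+m+2) ^ (2*d-2)) ^ 2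
      + (\<Sum>i\<in>{1..m}. (eval (homog (2*d) (g i) (var (n+m+2))) z - z (n+i) ^ 2 * z (n+m+2) ^ (2*d-2)) ^ 2)
      + ((?T) ^ d * z (n+m+2) ^ (2*d) - ((\<Sum>j<n. z j ^ 2) + (\<Sum>i=0..m. z (n+i) ^ 2)) ^ d - z (n+(m+1)) ^ (2*d)) ^ 2 = 0"
      using H0 unfolding eval_H by simp
    have "(?T) ^ d * z (n+m+2) ^ (2*d) - ((\<Sum>j<n. z j ^ 2) + (\<Sum>i=0..m. z (n+i) ^ 2)) ^ d - z (n+(m+1)) ^ (2*d) = 0"
      by (rule sq_sum_zero(3)[OF E]) simp
    moreover have "(?T) ^ d * z (n+m+2) ^ (2*d) = 0" using True d1 by simp
    ultimately have A: "((\<Sum>j<n. z j ^ 2) + (\<Sum>i=0..m. z (n+i) ^ 2)) ^ d + z (n+(m+1)) ^ (2*d) = 0" by linarith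
    have A0: "0 \<le> (\<Sum>j<n. z j ^ 2) + (\<Sum>i=0..m. z (n+i) ^ 2)" by (intro add_nonneg_nonneg sum_nonneg) auto
    have p1: "0 \<le> ((\<Sum>j<n. z j ^ 2) + (\<Sum>i=0..m. z (n+i) ^ 2)) ^ d" using A0 by simp
    have p2: "0 \<le> z (n+(m+1)) ^ (2*d)" by (simp add: power_mult)
    have "((\<Sum>j<n. z j ^ 2) + (\<Sum>i=0..m. z (n+i) ^ 2)) ^ d = 0" using A p1 p2 by linarith
    then have "(\<Sum>j<n. z j ^ 2) + (\<Sum>i=0..m. z (n+i) ^ 2) = 0" by simp
    then have Z1: "(\<Sum>j<n. z j ^ 2) = 0" "(\<Sum>i=0..m. z (n+i) ^ 2) = 0"
      using sum_nonneg[of "{..<n}" "\<lambda>j. z j ^ 2"] sum_nonneg[of "{0..m}" "\<lambda>i. z (n+i) ^ 2"] by (simp_all add: add_nonneg_eq_0_iff)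
    have zx: "\<forall>j<n. z j = 0" using Z1(1) by (simp add: sum_nonneg_eq_0_iff)
    have zs: "\<forall>i\<le>m. z (n+i) = 0" using Z1(2) by (simp add: sum_nonneg_eq_0_iff)
    have "z (n+(m+1)) ^ (2*d) = 0" using A p1 p2 by linarith
    then have zm: "z (n+(m+1)) = 0" by simp
    have "\<forall>i<n+m+3. z i = 0"
    proof (intro allI impI)
      fix i assume i: "i < n+m+3"
      show "z i = 0"
      proof (cases "i < n")
        case True then show ?thesis using zx by simp
      next
        case False
        then obtain k where k: "i = n + k" by (metis le_add_diff_inverse not_less)
        then have "k \<le> m \<or> k = m+1 \<or> k = m+2" using i by linarith
        then show ?thesis using zs zm \<open>z (n+m+2) = 0\<close> k by (auto simp: add.assoc)
      qed
    qed
    then have "(\<Sum>i<n+m+3. z i ^ 2) = 0" by simp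
    then show False using nz by simp
  qed
qed



lemma eval_certificate:
  "eval (certificate n m d p g R \<eta> \<beta> r) P =
    (eval (hform n m d p g R \<eta> \<beta>) (\<lambda>i. P (2*i) ^ 2 - P (2*i+1) ^ 2)
      - 1 / real r * (\<Sum>i<n+m+3. (P (2*i) ^ 2 - P (2*i+1) ^ 2) ^ 2) ^ (2*d)
      + 1 / (2 * real r) * (\<Sum>i<n+m+3. P (2*i) ^ 4 + P (2*i+1) ^ 4) ^ (2*d))
    * ((\<Sum>i<n+m+3. P (2*i) ^ 2) + (\<Sum>i<n+m+3. P (2*i+1) ^ 2)) ^ (r^2)"
  by (simp add: certificate_def Let_def eval_subst vv_def ww_def)

lemma max_facts:
  fixes a :: real
  shows "sqrt (max a 0) ^ 2 - sqrt (max (-a) 0) ^ 2 = a"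
    "sqrt (max a 0) ^ 4 + sqrt (max (-a) 0) ^ 4 = a ^ 2"
    "sqrt (max a 0) ^ 2 + sqrt (max (-a) 0) ^ 2 = \<bar>a\<bar>"
proof -
  have q: "sqrt (max b 0) ^ 2 = max b 0" for b :: real by simp
  have f: "x ^ 4 = (x ^ 2) ^ 2" for x :: real by (simp add: power_mult[symmetric])
  show "sqrt (max a 0) ^ 2 - sqrt (max (-a) 0) ^ 2 = a" unfolding q by (simp add: max_def)
  show "sqrt (max a 0) ^ 4 + sqrt (max (-a) 0) ^ 4 = a ^ 2" unfolding f q by (simp add: max_def)
  show "sqrt (max a 0) ^ 2 + sqrt (max (-a) 0) ^ 2 = \<bar>a\<bar>" unfolding q by (simp add: max_def)
qed

lemma reverse_dir:
  fixes n m d :: nat and p :: mpoly and g :: "nat \<Rightarrow> mpoly" and R \<beta> :: real and \<eta> :: "nat \<Rightarrow> real"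
  assumes vars_p: "\<forall>\<alpha>\<in>Poly_Mapping.keys p. Poly_Mapping.keys \<alpha> \<subseteq> {..<n}"
    and vars_g: "\<forall>i\<in>{1..m}. \<forall>\<alpha>\<in>Poly_Mapping.keys (g i). Poly_Mapping.keys \<alpha> \<subseteq> {..<n}"
    and d1: "1 \<le> d"
    and R_bound: "\<forall>x\<in>semialg n m g. (\<Sum>j<n. x j ^ 2) \<le> R"
    and eta_bound: "\<forall>i\<in>{1..m}. \<forall>x\<in>semialg n m g. eval (g i) x \<le> \<eta> i"
    and beta_bound: "\<forall>x\<in>semialg n m g. - eval p x \<le> \<beta>"
    and r0: "0 < r"
    and nncert: "\<forall>\<alpha>. 0 \<le> Poly_Mapping.lookup (certificate n m d p g R \<eta> \<beta> r) \<alpha>"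
  shows "\<forall>x\<in>semialg n m g. eval p x > 0"
proof (rule ccontr)
  assume "\<not> ?thesis"
  then obtain x where xS: "x \<in> semialg n m g" and px: "eval p x \<le> 0" by (auto simp: not_less)
  let ?T = "R + (\<Sum>i=1..m. \<eta> i) + \<beta>"
  define s where "s = (\<lambda>i. if i = 0 then sqrt (- eval p x) else sqrt (eval (g i) x))"
  have gx: "0 \<le> eval (g i) x" if "i \<in> {1..m}" for i using xS that by (simp add: semialg_def)
  have s0: "s 0 ^ 2 = - eval p x" using px by (simp add: s_def)
  have si: "s i ^ 2 = eval (g i) x" if "i \<in> {1..m}" for i using gx[OF that] that by (simp add: s_def)
  define A where "A = (\<Sum>j<n. x j ^ 2) + (\<Sum>i=0..m. s i ^ 2)"
  have sumS: "(\<Sum>i=0..m. s i ^ 2) = - eval p x + (\<Sum>i=1..m. eval (g i) x)"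
  proof -
    have "{0..m} = insert 0 {1..m}" by auto
    then have "(\<Sum>i=0..m. s i ^ 2) = s 0 ^ 2 + (\<Sum>i=1..m. s i ^ 2)" by simp
    also have "(\<Sum>i=1..m. s i ^ 2) = (\<Sum>i=1..m. eval (g i) x)" by (rule sum.cong) (auto simp: si)
    finally show ?thesis using s0 by simp
  qed
  have A0: "0 \<le> A" unfolding A_def by (intro add_nonneg_nonneg sum_nonneg) auto
  have AT: "A \<le> ?T"
  proof -
    have "(\<Sum>i=1..m. eval (g i) x) \<le> (\<Sum>i=1..m. \<eta> i)" by (rule sum_mono) (use eta_bound xS in auto)
    then show ?thesis unfolding A_def sumS using R_bound beta_bound xS by fastforce
  qed
  have TA: "0 \<le> ?T ^ d - A ^ d" using power_mono[OF AT A0, of d] by simp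
  define t where "t = root (2*d) (?T ^ d - A ^ d)"
  have t2d: "t ^ (2*d) = ?T ^ d - A ^ d" unfolding t_def by (rule real_root_pow_pos2) (use d1 TA in auto)
  define z where "z = (\<lambda>i. if i < n then x i else if i \<le> n+m then s (i - n) else if i = n+m+1 then t else if i = n+m+2 then 1 else 0)"
  have zy: "z (n+m+2) = 1" by (simp add: z_def)
  have zs: "z (n+i) = s i" if "i \<le> m" for i using that by (simp add: z_def)
  have zt: "z (n+(m+1)) = t" by (simp add: z_def)
  have pz: "eval p z = eval p x" by (rule eval_cong_vars[OF vars_p]) (simp add: z_def)
  have xn: "\<forall>i\<ge>n. x i = 0" using xS by (simp add: semialg_def)
  have gzx: "eval (g i) z = eval (g i) x" if "i \<in> {1..m}" for i
    by (rule eval_cong_vars[of _ "{..<n}"]) (use vars_g that in \<open>auto simp: z_def\<close>)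
  let ?H = "hform n m d p g R \<eta> \<beta>"
  have H0: "eval ?H z = 0"
  proof -
    have t1: "eval p z + z n ^ 2 = 0" using zs[of 0] s0 pz by simp
    have t2: "(\<Sum>i=1..m. (eval (g i) z - z (n+i) ^ 2) ^ 2) = 0"
      by (rule sum.neutral) (auto simp: zs gzx si)
    have sx: "(\<Sum>j<n. z j ^ 2) = (\<Sum>j<n. x j ^ 2)" by (simp add: z_def)
    have ss: "(\<Sum>i=0..m. z (n+i) ^ 2) = (\<Sum>i=0..m. s i ^ 2)" by (rule sum.cong) (auto simp: zs)
    have t3: "?T ^ d - ((\<Sum>j<n. z j ^ 2) + (\<Sum>i=0..m. z (n+i) ^ 2)) ^ d - z (n+(m+1)) ^ (2*d) = 0"
      unfolding sx ss zt t2d A_def[symmetric] by simp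
    show ?thesis unfolding eval_H eval_homog1[of z "n+m+2", OF zy] zy
      using t1 t2 t3 by simp
  qed
  define P where "P = (\<lambda>j. if even j then sqrt (max (z (j div 2)) 0) else sqrt (max (- z (j div 2)) 0))"
  have P0: "P (2*i) = sqrt (max (z i) 0)" for i by (simp add: P_def)
  have P1: "P (2*i+1) = sqrt (max (- z i) 0)" for i by (simp add: P_def)
  have Pnn: "\<And>j. 0 \<le> P j" by (simp add: P_def)
  define \<sigma> where "\<sigma> = (\<Sum>i<n+m+3. z i ^ 2)"
  have e1: "(\<lambda>i. P (2*i) ^ 2 - P (2*i+1) ^ 2) = z" by (rule ext) (simp only: P0 P1 max_facts(1))
  have e1': "(\<Sum>i<n+m+3. (P (2*i) ^ 2 - P (2*i+1) ^ 2) ^ 2) = \<sigma>" unfolding \<sigma>_def by (simp only: P0 P1 max_facts(1))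
  have e2: "(\<Sum>i<n+m+3. P (2*i) ^ 4 + P (2*i+1) ^ 4) = \<sigma>" unfolding P0 P1 max_facts(2) \<sigma>_def ..
  have e3: "(\<Sum>i<n+m+3. P (2*i) ^ 2) + (\<Sum>i<n+m+3. P (2*i+1) ^ 2) = (\<Sum>i<n+m+3. \<bar>z i\<bar>)"
    unfolding P0 P1 sum.distrib[symmetric] max_facts(3) ..
  have "z (n+m+2) ^ 2 \<le> \<sigma>" unfolding \<sigma>_def by (rule member_le_sum) auto
  then have \<sigma>p: "0 < \<sigma>" using zy by simp
  have "\<bar>z (n+m+2)\<bar> \<le> (\<Sum>i<n+m+3. \<bar>z i\<bar>)" by (rule member_le_sum) auto
  then have ap: "0 < (\<Sum>i<n+m+3. \<bar>z i\<bar>)" using zy by simp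
  have "eval (certificate n m d p g R \<eta> \<beta> r) P = (- (\<sigma> ^ (2*d) / (2 * real r))) * (\<Sum>i<n+m+3. \<bar>z i\<bar>) ^ (r^2)"
    unfolding eval_certificate e1 e1' e2 e3 H0 \<sigma>_def[symmetric] using r0 by (simp add: field_simps)
  also have "\<dots> < 0" using \<sigma>p ap r0 by (intro mult_neg_pos) auto
  finally have neg: "eval (certificate n m d p g R \<eta> \<beta> r) P < 0" .
  have "0 \<le> eval (certificate n m d p g R \<eta> \<beta> r) P"
    by (rule eval_nonneg) (use nncert Pnn in \<open>auto simp: nn_def\<close>)
  then show False using neg by simp
qed



lemma lookup_const_mult: "Poly_Mapping.lookup (const c * q) \<alpha> = c * Poly_Mapping.lookup q \<alpha>"
proof -
  have "const c * q = Poly_Mapping.map ((*) c) q" by (simp add: const_def mult_map_scale_conv_mult)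
  then show ?thesis by (simp add: map.rep_eq when_def)
qed

lemma sum_split_even_odd: "(\<Sum>j<2*(N::nat). f j) = (\<Sum>i<N. f (2*i)) + (\<Sum>i<N. (f (2*i+1)::'a::comm_monoid_add))"
  by (induction N) (simp_all add: algebra_simps)

lemma pow22: "((x::'a::monoid_mult) ^ 2) ^ 2 = x ^ 4"
  by (simp add: power_mult[symmetric])

lemma forward_dir:
  fixes n m d :: nat and p :: mpoly and g :: "nat \<Rightarrow> mpoly" and R \<beta> :: real and \<eta> :: "nat \<Rightarrow> real"
  assumes vars_p: "\<forall>\<alpha>\<in>Poly_Mapping.keys p. Poly_Mapping.keys \<alpha> \<subseteq> {..<n}"
    and vars_g: "\<forall>i\<in>{1..m}. \<forall>\<alpha>\<in>Poly_Mapping.keys (g i). Poly_Mapping.keys \<alpha> \<subseteq> {..<n}"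
    and d1: "1 \<le> d" and dp: "\<forall>\<alpha>\<in>Poly_Mapping.keys p. mon_deg \<alpha> \<le> 2*d"
    and dg: "\<forall>i\<in>{1..m}. \<forall>\<alpha>\<in>Poly_Mapping.keys (g i). mon_deg \<alpha> \<le> 2*d"
    and ppos: "\<forall>x\<in>semialg n m g. eval p x > 0"
  shows "\<exists>r::nat. r > 0 \<and> (\<forall>\<alpha>. 0 \<le> Poly_Mapping.lookup (certificate n m d p g R \<eta> \<beta> r) \<alpha>)"
proof -
  define N where "N = n+m+3"
  define H where "H = hform n m d p g R \<eta> \<beta>"
  define D where "D = 4*d"
  have D1: "1 \<le> D" using d1 by (simp add: D_def)
  have hH: "hom D {..<N} H" unfolding H_def N_def D_def by (rule hom_H[OF vars_p vars_g d1 dp dg])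
  have N1: "1 \<le> N" by (simp add: N_def)
  obtain c where c0: "0 < c" and cH: "\<And>z. c * sqrt (\<Sum>i<N. z i ^ 2) ^ D \<le> eval H z"
    using hom_eval_lower[OF hH D1 N1] H_pos[OF vars_p vars_g d1 dp dg ppos] unfolding H_def N_def by blast
  define V where "V = {..<2*N}"
  define \<sigma> where "\<sigma> = (\<lambda>i. var (2*i) - var (2*i+1))"
  define A where "A = subst H \<sigma>"
  define Zp where "Zp = (\<Sum>i<N. \<sigma> i ^ 2) ^ (2*d)"
  define Qp where "Qp = (\<Sum>i<N. var (2*i) ^ 2 + var (2*i+1) ^ 2) ^ (2*d)"
  define G where "G = (\<lambda>r::nat. A - const (1 / real r) * Zp + const (1 / (2 * real r)) * Qp)"
  have v2: "hom 1 V (var (2*i))" "hom 1 V (var (2*i+1))" if "i < N" for i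
    by (rule hom_var, use that in \<open>simp add: V_def\<close>)+
  have h\<sigma>: "hom 1 V (\<sigma> i)" if "i \<in> {..<N}" for i using v2 that by (auto simp: \<sigma>_def intro: hom_diff)
  have hA: "hom D V A" unfolding A_def by (rule hom_subst[OF hH h\<sigma>])
  have hZ: "hom D V Zp"
  proof -
    have "hom 2 V (\<Sum>i<N. \<sigma> i ^ 2)"
      by (rule hom_sum) (use hom_power[OF h\<sigma>, of _ 2] in simp)
    from hom_power[OF this, of "2*d"] show ?thesis by (simp add: Zp_def D_def)
  qed
  have hQ: "hom D V Qp"
  proof -
    have "hom 2 V (\<Sum>i<N. var (2*i) ^ 2 + var (2*i+1) ^ 2)"
      by (rule hom_sum) (use hom_power[OF v2(1), of _ 2] hom_power[OF v2(2), of _ 2] in \<open>auto intro!: hom_add\<close>)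
    from hom_power[OF this, of "2*d"] show ?thesis by (simp add: Qp_def D_def)
  qed
  have hG: "hom D V (G r)" for r
    unfolding G_def by (intro hom_add hom_diff hA hom_cmult hZ hQ)
  define K where "K = Poly_Mapping.keys A \<union> Poly_Mapping.keys Zp \<union> Poly_Mapping.keys Qp"
  define L where "L = (\<Sum>\<beta>\<in>K. \<bar>Poly_Mapping.lookup A \<beta>\<bar>) + (\<Sum>\<beta>\<in>K. \<bar>Poly_Mapping.lookup Zp \<beta>\<bar>) + (\<Sum>\<beta>\<in>K. \<bar>Poly_Mapping.lookup Qp \<beta>\<bar>)"
  have finK: "finite K" by (simp add: K_def)
  have lkG: "Poly_Mapping.lookup (G r) \<beta> = Poly_Mapping.lookup A \<beta> - 1 / real r * Poly_Mapping.lookup Zp \<beta> + 1 / (2 * real r) * Poly_Mapping.lookup Qp \<beta>" for r \<beta>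
    by (simp add: G_def lookup_add lookup_minus lookup_const_mult)
  have kG: "Poly_Mapping.keys (G r) \<subseteq> K" for r
    by (auto simp: K_def in_keys_iff lkG)
  have LG: "(\<Sum>\<beta>\<in>K. \<bar>Poly_Mapping.lookup (G r) \<beta>\<bar>) \<le> L" if "1 \<le> r" for r
  proof -
    have r1: "1 / real r \<le> 1" "1 / (2 * real r) \<le> 1" "0 \<le> 1 / real r" using that by auto
    have "\<bar>Poly_Mapping.lookup (G r) \<beta>\<bar> \<le> \<bar>Poly_Mapping.lookup A \<beta>\<bar> + \<bar>Poly_Mapping.lookup Zp \<beta>\<bar> + \<bar>Poly_Mapping.lookup Qp \<beta>\<bar>" for \<beta>
    proof -
      have a: "\<bar>1 / real r * Poly_Mapping.lookup Zp \<beta>\<bar> \<le> \<bar>Poly_Mapping.lookup Zp \<beta>\<bar>"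
      proof -
        have "\<bar>1 / real r * Poly_Mapping.lookup Zp \<beta>\<bar> = 1 / real r * \<bar>Poly_Mapping.lookup Zp \<beta>\<bar>" by (simp add: abs_mult)
        also have "\<dots> \<le> 1 * \<bar>Poly_Mapping.lookup Zp \<beta>\<bar>" by (rule mult_right_mono) (use r1 in auto)
        finally show ?thesis by simp
      qed
      have b: "\<bar>1 / (2 * real r) * Poly_Mapping.lookup Qp \<beta>\<bar> \<le> \<bar>Poly_Mapping.lookup Qp \<beta>\<bar>"
      proof -
        have "\<bar>1 / (2 * real r) * Poly_Mapping.lookup Qp \<beta>\<bar> = 1 / (2 * real r) * \<bar>Poly_Mapping.lookup Qp \<beta>\<bar>" by (simp add: abs_mult)
        also have "\<dots> \<le> 1 * \<bar>Poly_Mapping.lookup Qp \<beta>\<bar>" by (rule mult_right_mono) (use r1 in auto)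
        finally show ?thesis by simp
      qed
      show ?thesis unfolding lkG using a b by linarith
    qed
    then have "(\<Sum>\<beta>\<in>K. \<bar>Poly_Mapping.lookup (G r) \<beta>\<bar>) \<le> (\<Sum>\<beta>\<in>K. \<bar>Poly_Mapping.lookup A \<beta>\<bar> + \<bar>Poly_Mapping.lookup Zp \<beta>\<bar> + \<bar>Poly_Mapping.lookup Qp \<beta>\<bar>)"
      by (intro sum_mono)
    also have "\<dots> = L" by (simp add: L_def sum.distrib)
    finally show ?thesis .
  qed
  have L0: "0 \<le> L" unfolding L_def by (intro add_nonneg_nonneg sum_nonneg) auto
  define \<kappa> where "\<kappa> = (1 / (2 * real N)) ^ (2*d)"
  have \<kappa>0: "0 < \<kappa>" using N1 by (simp add: \<kappa>_def)
  have posG: "\<kappa> / (2 * real r) \<le> eval (G r) x"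
    if r: "1 / c \<le> real r" "0 < r" and x0: "\<forall>i. 0 \<le> x i" and x1: "(\<Sum>i\<in>V. x i) = 1" for r x
  proof -
    define w where "w = (\<lambda>i. x (2*i) - x (2*i+1))"
    define s where "s = (\<Sum>i<N. w i ^ 2)"
    define q where "q = (\<Sum>i<N. x (2*i) ^ 2 + x (2*i+1) ^ 2)"
    have s0: "0 \<le> s" unfolding s_def by (rule sum_nonneg) auto
    have ev: "eval (G r) x = eval H w - 1 / real r * s ^ (2*d) + 1 / (2 * real r) * q ^ (2*d)"
      by (simp add: G_def A_def Zp_def Qp_def eval_subst \<sigma>_def w_def s_def q_def)
    have "c * s ^ (2*d) \<le> eval H w"
    proof -
      have "sqrt s ^ D = (sqrt s ^ 2) ^ (2*d)" unfolding D_def power_mult[symmetric] by (simp add: mult.commute)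
      also have "\<dots> = s ^ (2*d)" using s0 by simp
      finally have "sqrt s ^ D = s ^ (2*d)" .
      then show ?thesis using cH[of w] by (simp add: s_def)
    qed
    moreover have "1 / real r * s ^ (2*d) \<le> c * s ^ (2*d)"
    proof (rule mult_right_mono)
      show "1 / real r \<le> c" using r c0 by (simp add: divide_le_eq mult.commute pos_divide_le_eq)
    qed (use s0 in simp)
    moreover have "\<kappa> \<le> q ^ (2*d)"
    proof -
      have qV: "q = (\<Sum>j\<in>V. x j ^ 2)" unfolding q_def V_def sum_split_even_odd by (simp add: sum.distrib)
      have "(\<Sum>j\<in>V. x j)\<^sup>2 \<le> (\<Sum>j\<in>V. (x j)\<^sup>2) * card V" by (rule sum_squared_le_sum_of_squares)
      then have "1 \<le> q * (2 * real N)" using x1 qV by (simp add: V_def)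
      then have "1 / (2 * real N) \<le> q" using N1 by (simp add: divide_le_eq mult.commute)
      then show ?thesis unfolding \<kappa>_def by (rule power_mono) (use N1 in simp)
    qed
    ultimately have h1: "1 / real r * s ^ (2*d) \<le> eval H w" and h2: "\<kappa> \<le> q ^ (2*d)" by linarith+
    have "\<kappa> / (2 * real r) \<le> q ^ (2*d) / (2 * real r)" by (rule divide_right_mono[OF h2]) simp
    then show ?thesis unfolding ev using h1 by simp
  qed
  define r where "r = nat \<lceil>max (1 / c) (2 * L * real D ^ 2 / \<kappa>)\<rceil> + 1"
  have r0: "0 < r" "1 \<le> r" by (simp_all add: r_def)
  have rc: "1 / c \<le> real r" unfolding r_def by linarith
  have rL: "2 * L * real D ^ 2 / \<kappa> \<le> real r" unfolding r_def by linarith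
  have big: "L * real D ^ 2 \<le> real (r^2 + D) * (\<kappa> / (2 * real r))"
  proof -
    have "L * real D ^ 2 \<le> real r * \<kappa> / 2" using rL \<kappa>0 by (simp add: divide_le_eq mult.commute)
    also have "\<dots> = real (r^2) * (\<kappa> / (2 * real r))" using r0 by (simp add: power2_eq_square)
    also have "\<dots> \<le> real (r^2 + D) * (\<kappa> / (2 * real r))"
      by (rule mult_right_mono) (use \<kappa>0 in auto)
    finally show ?thesis .
  qed
  have nnP: "nn (G r * SV V ^ (r^2))"
    by (rule polya[OF _ hG D1 finK kG LG[OF r0(2)] _ big]) (use posG[OF rc r0(1)] in \<open>auto simp: V_def\<close>)
  define sq where "sq = (\<lambda>j. var j ^ 2 :: mpoly)"
  have SVe: "SV V = (\<Sum>i<N. var (2*i)) + (\<Sum>i<N. var (2*i+1))"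
    unfolding SV_def V_def by (rule sum_split_even_odd)
  have cert: "certificate n m d p g R \<eta> \<beta> r = subst (G r * SV V ^ (r^2)) sq"
    by (simp add: certificate_def Let_def G_def A_def Zp_def Qp_def SVe subst_subst \<sigma>_def sq_def
        vv_def ww_def H_def N_def pow22)
  have "nn (certificate n m d p g R \<eta> \<beta> r)"
    unfolding cert by (rule nn_subst[OF nnP]) (simp add: sq_def nn_power nn_var)
  then show ?thesis using r0(1) unfolding nn_def by blast
qed


theorem corollary4p4:
  fixes n m d :: nat and p :: mpoly and g :: "nat \<Rightarrow> mpoly"
    and R \<beta> :: real and \<eta> :: "nat \<Rightarrow> real"
  assumes vars_p: "\<forall>\<alpha>\<in>Poly_Mapping.keys p. Poly_Mapping.keys \<alpha> \<subseteq> {..<n}"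
    and vars_g: "\<forall>i\<in>{1..m}. \<forall>\<alpha>\<in>Poly_Mapping.keys (g i). Poly_Mapping.keys \<alpha> \<subseteq> {..<n}"
    and d_def: "d = max 1 ((Max (insert (total_deg p) (total_deg ` g ` {1..m})) + 1) div 2)"
    and R_pos: "R > 0"
    and R_bound: "\<forall>x\<in>semialg n m g. (\<Sum>j<n. x j ^ 2) \<le> R"
    and eta_bound: "\<forall>i\<in>{1..m}. \<forall>x\<in>semialg n m g. eval (g i) x \<le> \<eta> i"
    and beta_bound: "\<forall>x\<in>semialg n m g. - eval p x \<le> \<beta>"
  shows "(\<forall>x\<in>semialg n m g. eval p x > 0) \<longleftrightarrow>
         (\<exists>r::nat. r > 0 \<and>
            (\<forall>\<alpha>. 0 \<le> Poly_Mapping.lookup (certificate n m d p g R \<eta> \<beta> r) \<alpha>))"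
proof
  note db = deg_bounds[OF d_def]
  assume "\<forall>x\<in>semialg n m g. eval p x > 0"
  then show "\<exists>r::nat. r > 0 \<and> (\<forall>\<alpha>. 0 \<le> Poly_Mapping.lookup (certificate n m d p g R \<eta> \<beta> r) \<alpha>)"
    by (rule forward_dir[OF vars_p vars_g db])
next
  note db = deg_bounds[OF d_def]
  assume "\<exists>r::nat. r > 0 \<and> (\<forall>\<alpha>. 0 \<le> Poly_Mapping.lookup (certificate n m d p g R \<eta> \<beta> r) \<alpha>)"
  then obtain r where r: "r > 0" "\<forall>\<alpha>. 0 \<le> Poly_Mapping.lookup (certificate n m d p g R \<eta> \<beta> r) \<alpha>" by blast
  show "\<forall>x\<in>semialg n m g. eval p x > 0"
    by (rule reverse_dir[OF vars_p vars_g db(1) R_bound eta_bound beta_bound r])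
qed

end
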